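(* Let $\Theta=(-1/2,\infty)\times\mathbb{R}\times(0,\infty)$ and $\theta_0\in\Theta$. Then there exist $\dot\ell\in L_2(P_{\theta_0})$ and $\varepsilon_0>0$ such that for every $0<\varepsilon<\varepsilon_0$, \[|\ell_{\theta_1}(x)-\ell_{\theta_2}(x)|\le\dot\ell(x)\,\|\theta_1-\theta_2\|\quad\text{for all }x\in\bar S(2\varepsilon)\text{ and all }\theta_1,\theta_2\in U_\varepsilon(\theta_0).\] The same holds when $\Theta$ is replaced by any compact subset of $(-1/2,\infty)\times\mathbb{R}\times(0,\infty)$ containing $\theta_0$ in its interior.
   Context: $P_\theta$, $\theta=(\gamma,\mu,\sigma)$, is the GEV distribution with Lebesgue density $p_\theta(x)=\sigma^{-1}e^{-u}u^{\gamma+1}\mathbf 1(1+\gamma z>0)$, $z=(x-\mu)/\sigma$, $u=(1+\gamma z)^{-1/\gamma}$ for $\gamma\ne0$, $u=e^{-z}$ for $\gamma=0$; $\ell_\theta=\log p_\theta$. Support $S_\theta=\{x:\sigma+\gamma(x-\mu)>0\}$. $U_\varepsilon(\theta_0)=\{\theta\in\Theta:\|\theta-\theta_0\|<\varepsilon\}$ and $\bar S(\varepsilon)=\bigcap_{\theta\in U_\varepsilon(\theta_0)}S_\theta$ (these depend on the parameter set $\Theta$ used). *)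

theory Defs
  imports "HOL-Probability.Probability"
begin

text \<open>Parameters theta = (gamma, mu, sigma) :: real \<times> real \<times> real, with the Euclidean norm
  (the product norm on real \<times> real \<times> real is sqrt(gamma^2 + mu^2 + sigma^2)).\<close>

definition gev_u :: "real \<times> real \<times> real \<Rightarrow> real \<Rightarrow> real" where
  "gev_u \<theta> x = (case \<theta> of (\<gamma>, \<mu>, \<sigma>) \<Rightarrow>
     (let z = (x - \<mu>) / \<sigma> in
      if \<gamma> = 0 then exp (- z) else (1 + \<gamma> * z) powr (- 1 / \<gamma>)))"

definition gev_density :: "real \<times> real \<times> real \<Rightarrow> real \<Rightarrow> real" where
  "gev_density \<theta> x = (case \<theta> of (\<gamma>, \<mu>, \<sigma>) \<Rightarrow>
     (if 1 + \<gamma> * ((x - \<mu>) / \<sigma>) > 0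
      then (1 / \<sigma>) * exp (- gev_u \<theta> x) * (gev_u \<theta> x) powr (\<gamma> + 1)
      else 0))"

definition gev_loglik :: "real \<times> real \<times> real \<Rightarrow> real \<Rightarrow> real" where
  "gev_loglik \<theta> x = ln (gev_density \<theta> x)"

definition gev_measure :: "real \<times> real \<times> real \<Rightarrow> real measure" where
  "gev_measure \<theta> = density lborel (\<lambda>x. ennreal (gev_density \<theta> x))"

definition gev_support :: "real \<times> real \<times> real \<Rightarrow> real set" where
  "gev_support \<theta> = (case \<theta> of (\<gamma>, \<mu>, \<sigma>) \<Rightarrow> {x. \<sigma> + \<gamma> * (x - \<mu>) > 0})"

definition par_nbhd :: "(real \<times> real \<times> real) set \<Rightarrow> real \<times> real \<times> real \<Rightarrow> real \<Rightarrow> (real \<times> real \<times> real) set" where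
  "par_nbhd \<Theta> \<theta>0 \<epsilon> = {\<theta> \<in> \<Theta>. norm (\<theta> - \<theta>0) < \<epsilon>}"

definition common_support :: "(real \<times> real \<times> real) set \<Rightarrow> real \<times> real \<times> real \<Rightarrow> real \<Rightarrow> real set" where
  "common_support \<Theta> \<theta>0 \<epsilon> = (\<Inter>\<theta> \<in> par_nbhd \<Theta> \<theta>0 \<epsilon>. gev_support \<theta>)"

definition Theta_full :: "(real \<times> real \<times> real) set" where
  "Theta_full = {- 1 / 2 <..} \<times> UNIV \<times> {0 <..}"

end

theory Submission
  imports Defs
begin


lemma norm3: "norm ((a::real),(b::real),(c::real)) = sqrt(a^2+b^2+c^2)"
  by (simp add: norm_Pair)

lemma norm3_ge:
  fixes a b c :: real
  shows "\<bar>a\<bar> \<le> norm (a,b,c)" "\<bar>b\<bar> \<le> norm (a,b,c)" "\<bar>c\<bar> \<le> norm (a,b,c)"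
proof -
  show "\<bar>a\<bar> \<le> norm (a,b,c)" unfolding norm3
    by (rule real_le_rsqrt) (simp add: add_nonneg_nonneg)
  show "\<bar>b\<bar> \<le> norm (a,b,c)" unfolding norm3
    by (rule real_le_rsqrt) (simp add: add_nonneg_nonneg)
  show "\<bar>c\<bar> \<le> norm (a,b,c)" unfolding norm3
    by (rule real_le_rsqrt) (simp add: add_nonneg_nonneg)
qed

definition Lf :: "real \<Rightarrow> real \<Rightarrow> real" where
  "Lf g z = (if g = 0 then z else ln (1 + g * z) / g)"

lemma ln_lower: "0 < (y::real) \<Longrightarrow> 1 - 1/y \<le> ln y"
proof -
  assume y: "0 < y"
  have "ln (1/y) \<le> 1/y - 1" using y by (intro ln_le_minus_one) auto
  thus ?thesis using y by (simp add: ln_div)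
qed

lemma ln_upper: "0 < (y::real) \<Longrightarrow> ln y \<le> y - 1"
  by (rule ln_le_minus_one)

lemma ln_minus_lin: "0 < (y::real) \<Longrightarrow> \<bar>ln y - (y - 1)\<bar> \<le> (y-1)^2 / y"
proof -
  assume y: "0 < y"
  have a: "ln y \<le> y - 1" using ln_upper y by blast
  have b: "1 - 1/y \<le> ln y" using ln_lower y by blast
  have "(y-1)^2/y = y - 2 + 1/y" using y by (simp add: field_simps power2_eq_square)
  thus ?thesis using a b by (auto simp: abs_if)
qed

lemma ln_minus_frac: "0 < (y::real) \<Longrightarrow> \<bar>(y-1)/y - ln y\<bar> \<le> (y-1)^2 / y"
proof -
  assume y: "0 < y"
  have a: "ln y \<le> y - 1" using ln_upper y by blast
  have b: "1 - 1/y \<le> ln y" using ln_lower y by blast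
  have e1: "(y-1)/y = 1 - 1/y" using y by (simp add: field_simps)
  have "(y-1)^2/y = y - 2 + 1/y" using y by (simp add: field_simps power2_eq_square)
  thus ?thesis using a b e1 by (auto simp: abs_if)
qed

lemma Lf_bounds:
  assumes q: "0 < 1 + g*z"
  shows "min z (z/(1+g*z)) \<le> Lf g z" "Lf g z \<le> max z (z/(1+g*z))"
proof -
  let ?q = "1+g*z"
  have a: "ln ?q \<le> g*z" using ln_upper[OF q] by simp
  have b: "g*z/?q \<le> ln ?q" using ln_lower[OF q] q by (simp add: field_simps)
  have "min z (z/?q) \<le> Lf g z \<and> Lf g z \<le> max z (z/?q)"
  proof (cases "g = 0")
    case True thus ?thesis by (simp add: Lf_def)
  next
    case False
    show ?thesis
    proof (cases "g > 0")
      case True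
      have "ln ?q / g \<le> z" using a True by (simp add: divide_le_eq mult.commute)
      moreover have "z/?q \<le> ln ?q / g" using b True q by (simp add: le_divide_eq field_simps)
      ultimately show ?thesis using False by (simp add: Lf_def)
    next
      case gn: False
      hence gn: "g < 0" using False by simp
      have "z \<le> ln ?q / g" using a gn by (simp add: le_divide_eq mult.commute)
      moreover have "ln ?q / g \<le> z/?q" using b gn q by (simp add: divide_le_eq field_simps)
      ultimately show ?thesis using False by (simp add: Lf_def)
    qed
  qed
  thus "min z (z/(1+g*z)) \<le> Lf g z" "Lf g z \<le> max z (z/(1+g*z))" by auto
qed

lemma Lf_minus_z:
  assumes q: "0 < 1 + g*z"
  shows "\<bar>Lf g z - z\<bar> \<le> \<bar>g\<bar> * z^2 / (1+g*z)"
proof (cases "g = 0")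
  case True thus ?thesis by (simp add: Lf_def)
next
  case False
  have h: "\<bar>ln (1+g*z) - g*z\<bar> \<le> (g*z)^2/(1+g*z)" using ln_minus_lin[OF q] by simp
  have "Lf g z - z = (ln (1+g*z) - g*z)/g" using False by (simp add: Lf_def field_simps)
  hence "\<bar>Lf g z - z\<bar> = \<bar>ln (1+g*z) - g*z\<bar> / \<bar>g\<bar>" by simp
  also have "\<dots> \<le> ((g*z)^2/(1+g*z)) / \<bar>g\<bar>" by (intro divide_right_mono h) simp
  also have "\<dots> = \<bar>g\<bar> * z^2 / (1+g*z)"
  proof -
    have e: "(g*z)^2 = \<bar>g\<bar> * (\<bar>g\<bar> * z^2)"
      by (simp add: power2_eq_square abs_mult_self_eq mult.assoc[symmetric])
    have "\<bar>g\<bar> \<noteq> 0" using False by auto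
    thus ?thesis unfolding e by simp
  qed
  finally show ?thesis .
qed


lemma q_iff: "0 < (s::real) \<Longrightarrow> (0 < 1 + g*((x-m)/s)) \<longleftrightarrow> (0 < s + g*(x-m))"
proof -
  assume s: "0 < s"
  have "1 + g*((x-m)/s) = (s + g*(x-m))/s" using s by (simp add: field_simps)
  thus ?thesis using s by (simp add: zero_less_divide_iff)
qed

lemma gev_u_eq:
  assumes s: "0 < s" and q: "0 < 1 + g*((x-m)/s)"
  shows "gev_u (g,m,s) x = exp (- Lf g ((x-m)/s))"
proof (cases "g = 0")
  case True thus ?thesis by (simp add: gev_u_def Lf_def)
next
  case False
  have "(1 + g*((x-m)/s)) powr (-1/g) = exp (-1/g * ln (1 + g*((x-m)/s)))"
    using q by (simp add: powr_def)
  thus ?thesis using False by (simp add: gev_u_def Lf_def Let_def)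
qed

lemma loglik_eq:
  assumes s: "0 < s" and q: "0 < 1 + g*((x-m)/s)"
  shows "gev_loglik (g,m,s) x = - ln s - exp (- Lf g ((x-m)/s)) - (g+1) * Lf g ((x-m)/s)"
proof -
  define w where "w = Lf g ((x-m)/s)"
  have u: "gev_u (g,m,s) x = exp (-w)" using gev_u_eq[OF s q] w_def by simp
  have pw: "exp (-w) powr (g+1) = exp (-(g+1)*w)" by (simp add: powr_def algebra_simps)
  have "gev_density (g,m,s) x = (1/s) * exp (- exp (-w)) * exp (-(g+1)*w)"
    using q u pw by (simp add: gev_density_def)
  hence "gev_loglik (g,m,s) x = ln ((1/s) * exp (- exp (-w)) * exp (-(g+1)*w))"
    by (simp add: gev_loglik_def)
  also have "\<dots> = ln (1/s) + ln (exp (- exp (-w))) + ln (exp (-(g+1)*w))"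
  proof -
    have "ln ((1/s) * exp (- exp (-w)) * exp (-(g+1)*w)) = ln ((1/s) * exp (- exp (-w))) + ln (exp (-(g+1)*w))"
      by (rule ln_mult_pos) (use s in auto)
    also have "ln ((1/s) * exp (- exp (-w))) = ln (1/s) + ln (exp (- exp (-w)))"
      by (rule ln_mult_pos) (use s in auto)
    finally show ?thesis .
  qed
  also have "\<dots> = - ln s - exp (-w) - (g+1)*w" using s by (simp add: ln_div algebra_simps)
  finally show ?thesis unfolding w_def .
qed

lemma gev_density_eq:
  assumes s: "0 < s" and q: "0 < 1 + g*((x-m)/s)"
  shows "gev_density (g,m,s) x = (1/s) * exp (- exp (- Lf g ((x-m)/s))) * exp (-(g+1) * Lf g ((x-m)/s))"
proof -
  define w where "w = Lf g ((x-m)/s)"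
  have u: "gev_u (g,m,s) x = exp (-w)" using gev_u_eq[OF s q] w_def by simp
  have pw: "exp (-w) powr (g+1) = exp (-(g+1)*w)" by (simp add: powr_def algebra_simps)
  show ?thesis using q u pw by (simp add: gev_density_def w_def)
qed


lemma norm_diff3: "norm ((a::real,b::real,c::real) - (a0,b0,c0)) = norm (a-a0, b-b0, c-c0)"
  by simp

lemma comp_bounds:
  assumes "norm ((g::real,m::real,s::real) - (g0,m0,s0)) < e"
  shows "\<bar>g - g0\<bar> < e" "\<bar>m - m0\<bar> < e" "\<bar>s - s0\<bar> < e"
  using assms norm3_ge[where a="g-g0" and b="m-m0" and c="s-s0"] by auto

lemma perturb_norm:
  fixes g m s d1 d2 d3 :: real
  shows "norm ((g+d1,m+d2,s+d3) - (g0,m0,s0)) \<le> norm ((g,m,s) - (g0,m0,s0)) + norm (d1,d2,d3)"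
proof -
  have "(g+d1,m+d2,s+d3) - (g0,m0,s0) = ((g,m,s) - (g0,m0,s0)) + (d1,d2,d3)" by simp
  thus ?thesis by (metis norm_triangle_ineq)
qed

lemma LB:
  fixes g0 m0 s0 g m s x e :: real
  assumes s0: "0 < s0" and e: "0 < e" "e \<le> 1" "e \<le> s0/4"
    and hx: "\<forall>\<theta>'. norm (\<theta>' - (g0,m0,s0)) < 2*e \<longrightarrow> x \<in> gev_support \<theta>'"
    and h\<theta>: "norm ((g,m,s) - (g0,m0,s0)) < e"
  shows "(s0 + g0*(x-m0)) / (9 + 2*\<bar>g0\<bar>) \<le> s + g*(x-m)"
    and "0 < s0 + g0*(x-m0)" and "e/2 < s + g*(x-m)" and "e/2 * \<bar>x - m\<bar> < s + g*(x-m)"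
proof -
  have cb: "\<bar>g - g0\<bar> < e" "\<bar>m - m0\<bar> < e" "\<bar>s - s0\<bar> < e" using comp_bounds[OF h\<theta>] by auto
  show D: "0 < s0 + g0*(x-m0)" using hx[rule_format, of "(g0,m0,s0)"] e by (simp add: gev_support_def)
  define d where "d = e/2"
  define sgn1 where "sgn1 = (if x \<ge> m then 1 else -1::real)"
  have sgx: "sgn1 * (x-m) = \<bar>x-m\<bar>" by (simp add: sgn1_def)
  have n1: "norm ((g + (- d * sgn1), m + 0, s + 0) - (g0,m0,s0)) < 2*e"
  proof -
    have "norm (- d * sgn1, 0::real, 0::real) = d" by (simp add: norm3 sgn1_def d_def e(1) less_imp_le)
    moreover have "d < e" using d_def e by simp
    ultimately show ?thesis using perturb_norm[of g "- d * sgn1" m 0 s 0 g0 m0 s0] h\<theta> by linarith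
  qed
  have "x \<in> gev_support (g + (- d * sgn1), m + 0, s + 0)" using hx n1 by blast
  hence "0 < s + (g - d * sgn1)*(x-m)" by (simp add: gev_support_def)
  hence S1: "d * \<bar>x-m\<bar> < s + g*(x-m)" using sgx by (simp add: algebra_simps)
  thus "e/2 * \<bar>x - m\<bar> < s + g*(x-m)" by (simp add: d_def)
  have n2: "norm ((g + 0, m + 0, s + (-d)) - (g0,m0,s0)) < 2*e"
  proof -
    have "norm (0::real, 0::real, -d) = d" by (simp add: norm3 d_def e(1) less_imp_le)
    moreover have "d < e" using d_def e by simp
    ultimately show ?thesis using perturb_norm[of g 0 m 0 s "-d" g0 m0 s0] h\<theta> by linarith
  qed
  have "x \<in> gev_support (g + 0, m + 0, s + (-d))" using hx n2 by blast
  hence S2: "d < s + g*(x-m)" by (simp add: gev_support_def algebra_simps)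
  thus "e/2 < s + g*(x-m)" by (simp add: d_def)
  define S where "S = s + g*(x-m)"
  define D0 where "D0 = s0 + g0*(x-m0)"
  have eq: "D0 - S = (s0 - s) + (g0 - g)*(x-m0) + g*(m-m0)" by (simp add: S_def D0_def algebra_simps)
  have t1: "\<bar>(g0 - g)*(x-m0)\<bar> \<le> e * \<bar>x-m0\<bar>"
    using cb(1) by (simp add: abs_mult mult_right_mono abs_minus_commute)
  have gb: "\<bar>g\<bar> \<le> \<bar>g0\<bar> + 1" using cb(1) e by linarith
  have t2: "\<bar>g*(m-m0)\<bar> \<le> (\<bar>g0\<bar> + 1) * e"
    using cb(2) gb by (simp add: abs_mult mult_mono)
  have xm: "\<bar>x-m0\<bar> \<le> \<bar>x-m\<bar> + 1" using cb(2) e by linarith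
  have t1': "e * \<bar>x-m0\<bar> \<le> e * \<bar>x-m\<bar> + e" using xm e(1)
    by (metis distrib_left mult.right_neutral mult_left_mono less_imp_le)
  have Dle: "D0 \<le> S + e + (e*\<bar>x-m\<bar> + e) + (\<bar>g0\<bar>+1)*e"
    using eq t1 t1' t2 cb(3) by (auto simp: abs_le_iff)
  have A: "e*\<bar>x-m\<bar> \<le> 2*S" using S1 d_def S_def by simp
  have B: "e \<le> 2*S" using S2 d_def S_def by simp
  have C: "(\<bar>g0\<bar>+1)*e \<le> (\<bar>g0\<bar>+1)*(2*S)" using B by (intro mult_left_mono) auto
  have "D0 \<le> S * (9 + 2*\<bar>g0\<bar>)" using Dle A B C by (simp add: algebra_simps)
  thus "(s0 + g0*(x-m0)) / (9 + 2*\<bar>g0\<bar>) \<le> s + g*(x-m)"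
    by (simp add: S_def D0_def divide_le_eq)
qed


definition Ader :: "real \<Rightarrow> real \<Rightarrow> real" where
  "Ader g z = z / ((1+g*z)*g) - ln (1+g*z) / g^2"

lemma Ader_alt: "g \<noteq> 0 \<Longrightarrow> 0 < 1+g*z \<Longrightarrow> Ader g z = (((1+g*z)-1)/(1+g*z) - ln (1+g*z)) / g^2"
proof -
  assume g: "g \<noteq> 0" and q: "0 < 1+g*z"
  define Q where "Q = 1+g*z"
  have Q: "Q \<noteq> 0" using q Q_def by simp
  have "z = (Q - 1)/g" using g Q_def by simp
  hence "z / (Q*g) = (Q-1)/Q/g^2" using g Q by (simp add: field_simps power2_eq_square)
  thus ?thesis unfolding Ader_def Q_def[symmetric] by (simp add: diff_divide_distrib)
qed

lemma Ader_bound1: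
  assumes g: "g \<noteq> 0" and q: "0 < 1+g*z"
  shows "\<bar>Ader g z\<bar> \<le> z^2/(1+g*z)"
proof -
  have h: "\<bar>((1+g*z)-1)/(1+g*z) - ln (1+g*z)\<bar> \<le> ((1+g*z)-1)^2/(1+g*z)"
    using ln_minus_frac[OF q] by simp
  have "\<bar>Ader g z\<bar> = \<bar>((1+g*z)-1)/(1+g*z) - ln (1+g*z)\<bar> / g^2"
    using Ader_alt[OF g q] by simp
  also have "\<dots> \<le> (((1+g*z)-1)^2/(1+g*z)) / g^2" by (intro divide_right_mono h) simp
  also have "\<dots> = z^2/(1+g*z)"
  proof -
    have "((1+g*z)-1)^2 = g^2*z^2" by (simp add: power2_eq_square)
    thus ?thesis using g by simp
  qed
  finally show ?thesis .
qed

lemma Ader_bound2: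
  assumes g: "g \<noteq> 0" and q: "0 < 1+g*z"
  shows "\<bar>Ader g z\<bar> \<le> (\<bar>ln (1+g*z)\<bar> + 1 + 1/(1+g*z)) / g^2"
proof -
  have a: "\<bar>((1+g*z)-1)/(1+g*z)\<bar> \<le> 1 + 1/(1+g*z)"
  proof -
    have "((1+g*z)-1)/(1+g*z) = 1 - 1/(1+g*z)" using q by (simp add: field_simps)
    thus ?thesis using q by (simp add: abs_le_iff)
  qed
  have h: "\<bar>((1+g*z)-1)/(1+g*z) - ln (1+g*z)\<bar> \<le> \<bar>ln (1+g*z)\<bar> + 1 + 1/(1+g*z)"
    using a by linarith
  have "\<bar>Ader g z\<bar> = \<bar>((1+g*z)-1)/(1+g*z) - ln (1+g*z)\<bar> / g^2"
    using Ader_alt[OF g q] by simp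
  also have "\<dots> \<le> (\<bar>ln (1+g*z)\<bar> + 1 + 1/(1+g*z)) / g^2" by (intro divide_right_mono h) simp
  finally show ?thesis .
qed

lemma alg:
  fixes G X S L dg dm ds :: real
  assumes "S \<noteq> 0" "G \<noteq> 0" "1 + G*X/S \<noteq> 0"
  shows "((dg * X / S + (- (dm * S) - X * ds) * G / (S * S)) * G / (1 + G * X / S) - L * dg) / (G * G)
   = dg * (X/S / ((1 + G*X/S)*G) - L/G^2) + (- dm - X * ds / S) / (S * (1 + G * X / S))"
proof -
  define z where "z = X/S"
  have X: "X = z*S" using assms(1) z_def by simp
  define Q where "Q = 1 + G*z"
  have Q: "Q \<noteq> 0" using assms(3) Q_def z_def by simp
  have e1: "1 + G * X / S = Q" using Q_def X assms(1) by simp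
  have e2: "dg * X / S = dg*z" using X assms(1) by simp
  have e3: "(- (dm * S) - X * ds) * G / (S * S) = (- dm - z*ds)*G/S" using X assms(1) by (simp add: field_simps)
  have e4: "X * ds / S = z*ds" using X assms(1) by simp
  show ?thesis unfolding e1 e2 e3 e4 z_def[symmetric] Q_def[symmetric]
    using assms(1,2) Q by (simp add: field_simps power2_eq_square)
qed

lemma seg_deriv:
  fixes g2 dg m2 dm s2 ds x t :: real
  assumes s: "0 < s2 + t*ds" and q: "0 < 1 + (g2 + t*dg)*((x-(m2 + t*dm))/(s2 + t*ds))" and g: "g2 + t*dg \<noteq> 0"
  shows "((\<lambda>t. ln (1 + (g2+t*dg)*((x-(m2+t*dm))/(s2+t*ds))) / (g2+t*dg)) has_real_derivative
          (dg * Ader (g2 + t*dg) ((x-(m2 + t*dm))/(s2 + t*ds)) + ((- dm - ((x-(m2 + t*dm))/(s2 + t*ds))*ds)/(s2 + t*ds)) / (1 + (g2 + t*dg)*((x-(m2 + t*dm))/(s2 + t*ds))))) (at t)"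
  using s q g
  apply (intro derivative_eq_intros)
  apply auto
  unfolding Ader_def times_divide_eq_right
  apply (rule alg)
  apply auto
  done


lemma seg_mvt:
  fixes g1 m1 s1 g2 m2 s2 x B :: real
  defines "G \<equiv> \<lambda>t. g2 + t*(g1-g2)" and "M \<equiv> \<lambda>t. m2 + t*(m1-m2)" and "S \<equiv> \<lambda>t. s2 + t*(s1-s2)"
  assumes pos: "\<And>t. 0 \<le> t \<Longrightarrow> t \<le> 1 \<Longrightarrow> 0 < S t \<and> 0 < 1 + G t * ((x - M t)/S t) \<and> G t \<noteq> 0"
    and bnd: "\<And>t. 0 \<le> t \<Longrightarrow> t \<le> 1 \<Longrightarrow>
        \<bar>Ader (G t) ((x - M t)/S t)\<bar> + (1 + \<bar>(x - M t)/S t\<bar>) / (S t * (1 + G t * ((x - M t)/S t))) \<le> B"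
  shows "\<bar>ln (1+g1*((x-m1)/s1))/g1 - ln (1+g2*((x-m2)/s2))/g2\<bar> \<le> B * norm ((g1,m1,s1) - (g2,m2,s2))"
proof -
  define dg dm ds where "dg = g1-g2" and "dm = m1-m2" and "ds = s1-s2"
  define f where "f = (\<lambda>t. ln (1 + (g2+t*dg)*((x-(m2+t*dm))/(s2+t*ds))) / (g2+t*dg))"
  define f' where "f' = (\<lambda>t. dg * Ader (g2 + t*dg) ((x-(m2 + t*dm))/(s2 + t*ds)) + ((- dm - ((x-(m2 + t*dm))/(s2 + t*ds))*ds)/(s2 + t*ds)) / (1 + (g2 + t*dg)*((x-(m2 + t*dm))/(s2 + t*ds))))"
  have der: "DERIV f t :> f' t" if "0 \<le> t" "t \<le> 1" for t
    unfolding f_def f'_def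
    by (rule seg_deriv) (use pos[OF that] in \<open>auto simp: G_def M_def S_def dg_def dm_def ds_def\<close>)
  obtain t where t: "0 < t" "t < 1" "f 1 - f 0 = (1 - 0) * f' t"
    using MVT2[of 0 1 f f'] der by auto
  have f1: "f 1 = ln (1+g1*((x-m1)/s1))/g1" by (simp add: f_def dg_def dm_def ds_def)
  have f0: "f 0 = ln (1+g2*((x-m2)/s2))/g2" by (simp add: f_def)
  define N where "N = norm ((g1,m1,s1) - (g2,m2,s2))"
  have Nb: "\<bar>dg\<bar> \<le> N" "\<bar>dm\<bar> \<le> N" "\<bar>ds\<bar> \<le> N"
    using norm3_ge[where a=dg and b=dm and c=ds] by (auto simp: N_def dg_def dm_def ds_def)
  define A where "A = Ader (G t) ((x - M t)/S t)"
  define Z where "Z = (x - M t)/S t"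
  define Q where "Q = 1 + G t * Z"
  have pt: "0 < S t" "0 < Q" using pos[of t] t by (auto simp: Q_def Z_def)
  have bt: "\<bar>A\<bar> + (1 + \<bar>Z\<bar>) / (S t * Q) \<le> B" using bnd[of t] t by (simp add: A_def Z_def Q_def)
  have f't: "f' t = dg * A + ((- dm - Z*ds)/S t) / Q"
    by (simp add: f'_def A_def Z_def Q_def G_def M_def S_def dg_def dm_def ds_def)
  have "\<bar>dg * A\<bar> \<le> N * \<bar>A\<bar>" using Nb(1) by (simp add: abs_mult mult_right_mono)
  moreover have "\<bar>((- dm - Z*ds)/S t) / Q\<bar> \<le> N * ((1 + \<bar>Z\<bar>) / (S t * Q))"
  proof -
    have "\<bar>- dm - Z*ds\<bar> \<le> \<bar>dm\<bar> + \<bar>Z\<bar>*\<bar>ds\<bar>" using abs_mult[of Z ds] by arith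
    also have "\<dots> \<le> N + \<bar>Z\<bar>*N" using Nb by (simp add: mult_left_mono add_mono)
    finally have "\<bar>- dm - Z*ds\<bar> \<le> N*(1+\<bar>Z\<bar>)" by (simp add: algebra_simps)
    hence "\<bar>- dm - Z*ds\<bar> / (S t * Q) \<le> N*(1+\<bar>Z\<bar>) / (S t * Q)" using pt
      by (intro divide_right_mono) auto
    thus ?thesis using pt by (simp add: abs_divide)
  qed
  ultimately have "\<bar>f' t\<bar> \<le> N * (\<bar>A\<bar> + (1 + \<bar>Z\<bar>) / (S t * Q))" unfolding f't
    by (smt (verit) distrib_left)
  also have "\<dots> \<le> N * B" using bt by (intro mult_left_mono) (auto simp: N_def)
  finally show ?thesis using t(3) f1 f0 by (simp add: N_def mult.commute)
qed


locale gsetup =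
  fixes g0 m0 s0 e0 :: real
  assumes s0: "0 < s0" and g0: "-1/2 < g0" and e0: "0 < e0" "e0 \<le> 1" "e0 \<le> s0/4"
    and e0g: "g0 \<noteq> 0 \<Longrightarrow> e0 \<le> \<bar>g0\<bar>/2"
begin

definition reg where
  "reg e x g m s \<longleftrightarrow> 0 < e \<and> e < e0 \<and> (\<forall>\<theta>'. norm (\<theta>' - (g0,m0,s0)) < 2*e \<longrightarrow> x \<in> gev_support \<theta>')
     \<and> norm ((g,m,s) - (g0,m0,s0)) < e"

definition vv where "vv x = Lf g0 ((x-m0)/s0)"
definition PP where "PP x = (1 + \<bar>vv x\<bar>)^2 + exp (- g0 * vv x)"

lemma reg_basic:
  assumes r: "reg e x g m s"
  defines "z \<equiv> (x-m)/s" and "q \<equiv> 1 + g*((x-m)/s)" and "z0 \<equiv> (x-m0)/s0" and "q0 \<equiv> 1 + g0*((x-m0)/s0)"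
  shows "3* s0/4 < s" "s < 5* s0/4" "\<bar>g-g0\<bar> < e0" "\<bar>m-m0\<bar> < e0" "0 < q0"
    "q0 / (2*(9 + 2*\<bar>g0\<bar>)) \<le> q" "0 < q"
    "q \<le> (4/(3* s0)) * (s0*q0 + 2 + \<bar>g0\<bar> + s0*\<bar>z0\<bar>)"
    "exp (g0 * vv x) = q0"
proof -
  have e: "0 < e" "e < e0" and hx: "\<forall>\<theta>'. norm (\<theta>' - (g0,m0,s0)) < 2*e \<longrightarrow> x \<in> gev_support \<theta>'"
    and h\<theta>: "norm ((g,m,s) - (g0,m0,s0)) < e" using r by (auto simp: reg_def)
  have cb: "\<bar>g - g0\<bar> < e" "\<bar>m - m0\<bar> < e" "\<bar>s - s0\<bar> < e" using comp_bounds[OF h\<theta>] by auto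
  have ee: "e \<le> 1" "e \<le> s0/4" using e e0 by auto
  note L = LB[OF s0 e(1) ee hx h\<theta>]
  show s1: "3* s0/4 < s" "s < 5* s0/4" using cb(3) ee by auto
  show "\<bar>g-g0\<bar> < e0" "\<bar>m-m0\<bar> < e0" using cb e by auto
  have sp: "0 < s" using s1 s0 by linarith
  have D: "0 < s0 + g0*(x-m0)" by (rule L(2))
  have q0e: "q0 = (s0 + g0*(x-m0))/s0" using s0 by (simp add: q0_def field_simps)
  show q0p: "0 < q0" using D s0 q0e by simp
  have qe: "q = (s + g*(x-m))/s" using sp by (simp add: q_def field_simps)
  have C: "0 < 9 + 2*\<bar>g0\<bar>" by simp
  have "s0*q0 / (9 + 2*\<bar>g0\<bar>) \<le> s + g*(x-m)" using L(1) q0e s0 by simp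
  hence "s0*q0 / (9 + 2*\<bar>g0\<bar>) / s \<le> q" unfolding qe using sp by (intro divide_right_mono) auto
  moreover have "q0 / (2*(9 + 2*\<bar>g0\<bar>)) \<le> s0*q0 / (9 + 2*\<bar>g0\<bar>) / s"
  proof -
    have "q0 / (2*(9 + 2*\<bar>g0\<bar>)) = (q0 / (9 + 2*\<bar>g0\<bar>)) * (1/2)" by simp
    also have "\<dots> \<le> (q0 / (9 + 2*\<bar>g0\<bar>)) * (s0 / s)"
    proof (rule mult_left_mono)
      show "1/2 \<le> s0/s" using s1 sp s0 by (simp add: le_divide_eq)
      show "0 \<le> q0 / (9 + 2*\<bar>g0\<bar>)" using q0p by simp
    qed
    finally show ?thesis by (simp add: field_simps)
  qed
  ultimately show ql: "q0 / (2*(9 + 2*\<bar>g0\<bar>)) \<le> q" by linarith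
  moreover have "0 < q0 / (2*(9 + 2*\<bar>g0\<bar>))" using q0p by simp
  ultimately show "0 < q" by linarith
  have eq: "(s + g*(x-m)) - (s0 + g0*(x-m0)) = (s-s0) + (g-g0)*(x-m0) - g*(m-m0)" by (simp add: algebra_simps)
  have t1: "\<bar>(g-g0)*(x-m0)\<bar> \<le> \<bar>x-m0\<bar>"
  proof -
    have "\<bar>g-g0\<bar> * \<bar>x-m0\<bar> \<le> 1 * \<bar>x-m0\<bar>" using cb(1) e ee by (intro mult_right_mono) auto
    thus ?thesis by (simp add: abs_mult)
  qed
  have gb: "\<bar>g\<bar> \<le> \<bar>g0\<bar> + 1" using cb(1) ee by linarith
  have t2: "\<bar>g*(m-m0)\<bar> \<le> \<bar>g0\<bar> + 1"
  proof -
    have "\<bar>g\<bar> * \<bar>m-m0\<bar> \<le> (\<bar>g0\<bar> + 1) * 1" using cb(2) gb e ee by (intro mult_mono) auto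
    thus ?thesis by (simp add: abs_mult)
  qed
  have "s + g*(x-m) \<le> s0*q0 + 2 + \<bar>g0\<bar> + \<bar>x-m0\<bar>" 
  proof -
    have "s0 + g0*(x-m0) = s0*q0" using q0e s0 by simp
    moreover have "(s-s0) + (g-g0)*(x-m0) - g*(m-m0) \<le> 1 + \<bar>x-m0\<bar> + (\<bar>g0\<bar> + 1)"
      using t1 t2 cb(3) ee by (auto simp: abs_le_iff)
    ultimately show ?thesis using eq by linarith
  qed
  moreover have "\<bar>x-m0\<bar> = s0*\<bar>z0\<bar>" using s0 by (simp add: z0_def abs_divide)
  ultimately have Su: "s + g*(x-m) \<le> s0*q0 + 2 + \<bar>g0\<bar> + s0*\<bar>z0\<bar>" by simp
  have "q \<le> (s0*q0 + 2 + \<bar>g0\<bar> + s0*\<bar>z0\<bar>)/s" using qe Su sp by (simp add: divide_right_mono)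
  also have "\<dots> \<le> (s0*q0 + 2 + \<bar>g0\<bar> + s0*\<bar>z0\<bar>) * (4/(3* s0))"
  proof -
    have nn: "0 \<le> s0*q0 + 2 + \<bar>g0\<bar> + s0*\<bar>z0\<bar>" using s0 q0p by simp
    have "1/s \<le> 4/(3* s0)" using s1 sp s0 by (simp add: field_simps)
    thus ?thesis using nn by (metis divide_inverse inverse_eq_divide mult_left_mono)
  qed
  finally show "q \<le> (4/(3* s0)) * (s0*q0 + 2 + \<bar>g0\<bar> + s0*\<bar>z0\<bar>)" by (simp add: mult.commute)
  show "exp (g0 * vv x) = q0"
  proof (cases "g0 = 0")
    case True thus ?thesis by (simp add: q0_def)
  next
    case False
    have "exp (g0 * vv x) = exp (ln q0)" using False by (simp add: vv_def Lf_def q0_def)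
    thus ?thesis using q0p by simp
  qed
qed

end


lemma div_le_aux:
  fixes a N h c :: real
  assumes "a \<le> N" "0 \<le> N" "0 < h" "h \<le> c"
  shows "a/c \<le> N/h"
proof -
  have c: "0 < c" using assms by linarith
  have "a/c \<le> N/c" using assms c by (simp add: divide_right_mono)
  also have "\<dots> \<le> N/h" using assms by (simp add: frac_le)
  finally show ?thesis .
qed

context gsetup begin

definition "Cc = 9 + 2*\<bar>g0\<bar>"
definition "c1 = (4/(3 * s0)) * (s0 + 2 + \<bar>g0\<bar> + s0/\<bar>g0\<bar>)"
definition "cL = ln (2*Cc) + \<bar>ln c1\<bar> + ln 2"

lemma Cc_pos: "1 \<le> Cc" by (simp add: Cc_def)
lemma cL_nn: "0 \<le> cL"
proof -
  have "0 \<le> ln (2*Cc)" using Cc_pos by simp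
  thus ?thesis by (simp add: cL_def)
qed

lemma nz_q:
  assumes g0nz: "g0 \<noteq> 0" and r: "reg e x g m s"
  defines "q \<equiv> 1 + g*((x-m)/s)"
  shows "0 < q" "1/q \<le> 2*Cc*exp (- g0 * vv x)"
    "g0 * vv x - cL \<le> ln q" "ln q \<le> cL + max 0 (g0 * vv x)"
proof -
  define q0 where "q0 = 1 + g0*((x-m0)/s0)"
  define z0 where "z0 = (x-m0)/s0"
  note B = reg_basic[OF r, folded q_def q0_def z0_def]
  show qp: "0 < q" by (rule B(7))
  have q0p: "0 < q0" by (rule B(5))
  have ql: "q0/(2*Cc) \<le> q" using B(6) by (simp add: Cc_def)
  have eq0: "exp (g0 * vv x) = q0" by (rule B(9))
  have Cp: "0 < Cc" using Cc_pos by simp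
  have "1/q \<le> 1/(q0/(2*Cc))" using ql q0p Cp qp by (intro divide_left_mono) auto
  also have "\<dots> = 2*Cc*exp (- g0 * vv x)" using eq0 q0p by (simp add: exp_minus field_simps)
  finally show "1/q \<le> 2*Cc*exp (- g0 * vv x)" .
  have "ln (q0/(2*Cc)) \<le> ln q" using ql q0p Cp qp by (subst ln_le_cancel_iff) auto
  moreover have "ln (q0/(2*Cc)) = g0 * vv x - ln (2*Cc)" using q0p Cp eq0
    by (simp add: ln_div) (metis ln_exp)
  moreover have "ln (2*Cc) \<le> cL" by (simp add: cL_def)
  ultimately show "g0 * vv x - cL \<le> ln q" by linarith
  have z0e: "z0 = (q0 - 1)/g0" using g0nz by (simp add: q0_def z0_def)
  have az0: "\<bar>z0\<bar> \<le> (q0+1)/\<bar>g0\<bar>" unfolding z0e using q0p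
    by (simp add: abs_divide divide_right_mono)
  have qu: "q \<le> (4/(3 * s0)) * (s0*q0 + 2 + \<bar>g0\<bar> + s0*\<bar>z0\<bar>)" using B(8) .
  have "s0*q0 + 2 + \<bar>g0\<bar> + s0*\<bar>z0\<bar> \<le> (s0 + 2 + \<bar>g0\<bar> + s0/\<bar>g0\<bar>) * (1+q0)"
  proof -
    have "s0*\<bar>z0\<bar> \<le> s0*((q0+1)/\<bar>g0\<bar>)" using az0 s0 by (intro mult_left_mono) auto
    also have "\<dots> = (s0/\<bar>g0\<bar>)*(1+q0)" by (simp add: field_simps)
    finally have a: "s0*\<bar>z0\<bar> \<le> (s0/\<bar>g0\<bar>)*(1+q0)" .
    have b: "s0*q0 \<le> s0*(1+q0)" using s0 by simp
    have c: "2 + \<bar>g0\<bar> \<le> (2 + \<bar>g0\<bar>)*(1+q0)" using q0p mult_left_mono[of 1 "1+q0" "2+\<bar>g0\<bar>"] by simp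
    show ?thesis using a b c by (simp add: algebra_simps)
  qed
  hence "q \<le> c1 * (1+q0)" using qu s0 unfolding c1_def
    by (smt (verit, best) mult.assoc mult_left_mono zero_le_divide_iff)
  hence "ln q \<le> ln (c1 * (1+q0))" using qp by simp
  also have "\<dots> = ln c1 + ln (1+q0)"
  proof -
    have "0 < c1 * (1+q0)" using qp \<open>q \<le> c1 * (1+q0)\<close> by linarith
    hence "0 < c1" using q0p by (simp add: zero_less_mult_iff)
    thus ?thesis using q0p by (simp add: ln_mult)
  qed
  finally have lq1: "ln q \<le> ln c1 + ln (1+q0)" .
  have lq2: "ln (1+q0) \<le> ln 2 + max 0 (g0 * vv x)"
  proof (cases "q0 \<le> 1")
    case True
    hence "ln (1+q0) \<le> ln 2" using q0p by simp
    thus ?thesis by simp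
  next
    case False
    hence "ln (1+q0) \<le> ln (2*q0)" using q0p by simp
    also have "\<dots> = ln 2 + g0 * vv x" using q0p eq0 by (simp add: ln_mult) (metis ln_exp)
    finally show ?thesis by simp
  qed
  have "0 \<le> ln (2*Cc)" using Cc_pos by simp
  thus "ln q \<le> cL + max 0 (g0 * vv x)" unfolding cL_def using lq1 lq2 by linarith
qed

end


context gsetup begin

lemma nz_g:
  assumes g0nz: "g0 \<noteq> 0" and r: "reg e x g m s"
  shows "\<bar>g0\<bar>/2 \<le> \<bar>g\<bar>" "0 < g * g0" "g \<noteq> 0"
proof -
  have "\<bar>g-g0\<bar> < e0" by (rule reg_basic(3)[OF r])
  hence a: "\<bar>g-g0\<bar> < \<bar>g0\<bar>/2" using e0g[OF g0nz] by linarith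
  show "\<bar>g0\<bar>/2 \<le> \<bar>g\<bar>" using a by linarith
  show "0 < g * g0" using a g0nz by (cases "g0 > 0") (auto simp: zero_less_mult_iff abs_if split: if_splits)
  thus "g \<noteq> 0" by auto
qed

lemma nz_w:
  assumes g0nz: "g0 \<noteq> 0" and r: "reg e x g m s"
  defines "z \<equiv> (x-m)/s" and "q \<equiv> 1 + g*((x-m)/s)"
  shows "\<bar>Lf g z\<bar> \<le> 2*cL/\<bar>g0\<bar> + 2*\<bar>vv x\<bar>"
    "- Lf g z \<le> 2*cL/\<bar>g0\<bar> + 2*max 0 (- vv x)"
    "\<bar>Ader g z\<bar> + (1+\<bar>z\<bar>)/(s*q) \<le> (4/g0^2)*(cL + \<bar>g0\<bar>*\<bar>vv x\<bar> + 1 + 2*Cc*exp(-g0* vv x))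
        + (4/(3 * s0))*(2*Cc*exp(-g0* vv x) + (2/\<bar>g0\<bar>)*(1 + 2*Cc*exp(-g0* vv x)))"
proof -
  note Q = nz_q[OF g0nz r, folded q_def]
  note G = nz_g[OF g0nz r]
  have qz: "q = 1 + g*z" by (simp add: q_def z_def)
  have w: "Lf g z = ln q / g" using G(3) by (simp add: Lf_def qz)
  have h: "0 < \<bar>g0\<bar>/2" using g0nz by simp
  define v where "v = vv x"
  have alq: "\<bar>ln q\<bar> \<le> cL + \<bar>g0\<bar>*\<bar>v\<bar>"
  proof -
    have "max 0 (g0 * v) \<le> \<bar>g0\<bar>*\<bar>v\<bar>" by (simp add: abs_mult[symmetric])
    moreover have "- (\<bar>g0\<bar>*\<bar>v\<bar>) \<le> g0 * v" by (simp add: abs_mult[symmetric])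
    ultimately show ?thesis using Q(3,4) v_def by (auto simp: abs_le_iff)
  qed
  have "\<bar>Lf g z\<bar> = \<bar>ln q\<bar> / \<bar>g\<bar>" using w by (simp add: abs_divide)
  also have "\<dots> \<le> (cL + \<bar>g0\<bar>*\<bar>v\<bar>) / (\<bar>g0\<bar>/2)"
    using alq cL_nn G(1) h by (intro div_le_aux) auto
  also have "\<dots> = 2*cL/\<bar>g0\<bar> + 2*\<bar>v\<bar>" using g0nz by (simp add: field_simps)
  finally show "\<bar>Lf g z\<bar> \<le> 2*cL/\<bar>g0\<bar> + 2*\<bar>vv x\<bar>" by (simp add: v_def)
  define N where "N = cL + \<bar>g0\<bar> * max 0 (- v)"
  have Nn: "0 \<le> N" using cL_nn by (simp add: N_def)
  have "- Lf g z \<le> N / (\<bar>g0\<bar>/2)"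
  proof (cases "g0 > 0")
    case True
    hence gp: "0 < g" using G(2) by (simp add: zero_less_mult_iff)
    have "- ln q \<le> N"
    proof -
      have "- (g0 * v) \<le> g0 * max 0 (- v)" using mult_left_mono[of "-v" "max 0 (-v)" g0] True by simp
      thus ?thesis using Q(3) True by (simp add: N_def v_def)
    qed
    hence "(- ln q)/\<bar>g\<bar> \<le> N / (\<bar>g0\<bar>/2)" using Nn h G(1) by (intro div_le_aux) auto
    thus ?thesis using w gp by simp
  next
    case False
    hence gn: "g0 < 0" using g0nz by simp
    hence gp: "g < 0" using G(2) by (simp add: zero_less_mult_iff)
    have "ln q \<le> N"
    proof -
      have "max 0 (g0 * v) = \<bar>g0\<bar> * max 0 (- v)" using gn
        by (cases "v \<le> 0") (auto simp: max_def mult_nonpos_nonpos mult_neg_neg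
            zero_le_mult_iff mult_le_0_iff)
      thus ?thesis using Q(4) by (simp add: N_def v_def)
    qed
    hence "(ln q)/\<bar>g\<bar> \<le> N / (\<bar>g0\<bar>/2)" using Nn h G(1) by (intro div_le_aux) auto
    thus ?thesis using w gp by simp
  qed
  also have "N / (\<bar>g0\<bar>/2) = 2*cL/\<bar>g0\<bar> + 2*max 0 (- v)" using g0nz by (simp add: N_def field_simps)
  finally show "- Lf g z \<le> 2*cL/\<bar>g0\<bar> + 2*max 0 (- vv x)" by (simp add: v_def)
  define E where "E = exp (- g0 * v)"
  have iq: "1/q \<le> 2*Cc*E" using Q(2) by (simp add: E_def v_def)
  have qp: "0 < 1 + g*z" using Q(1) qz by simp
  have "\<bar>Ader g z\<bar> \<le> (\<bar>ln (1+g*z)\<bar> + 1 + 1/(1+g*z)) / g^2" by (rule Ader_bound2[OF G(3) qp])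
  also have "\<dots> \<le> (cL + \<bar>g0\<bar>*\<bar>v\<bar> + 1 + 2*Cc*E) / (g0^2/4)"
  proof (rule div_le_aux)
    show "\<bar>ln (1+g*z)\<bar> + 1 + 1/(1+g*z) \<le> cL + \<bar>g0\<bar>*\<bar>v\<bar> + 1 + 2*Cc*E"
      using alq iq qz by simp
    show "0 \<le> cL + \<bar>g0\<bar>*\<bar>v\<bar> + 1 + 2*Cc*E" using cL_nn Cc_pos by (simp add: E_def)
    show "0 < g0^2/4" using g0nz by simp
    have "(\<bar>g0\<bar>/2)^2 \<le> \<bar>g\<bar>^2" using G(1) h by (intro power_mono) auto
    thus "g0^2/4 \<le> g^2" by (simp add: power_divide)
  qed
  also have "\<dots> = (4/g0^2)*(cL + \<bar>g0\<bar>*\<bar>v\<bar> + 1 + 2*Cc*E)" by simp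
  finally have A: "\<bar>Ader g z\<bar> \<le> (4/g0^2)*(cL + \<bar>g0\<bar>*\<bar>v\<bar> + 1 + 2*Cc*E)" .
  have sp: "3 * s0/4 < s" by (rule reg_basic(1)[OF r])
  have zq: "z = (q-1)/g" using G(3) qz by simp
  have "\<bar>z\<bar>/q \<le> (2/\<bar>g0\<bar>)*(1 + 2*Cc*E)"
  proof -
    have "\<bar>z\<bar> \<le> (q+1)/\<bar>g\<bar>" unfolding zq using Q(1) by (simp add: abs_divide divide_right_mono)
    also have "\<dots> \<le> (q+1)/(\<bar>g0\<bar>/2)" using Q(1) G(1) h by (intro div_le_aux) auto
    finally have "\<bar>z\<bar>/q \<le> ((q+1)/(\<bar>g0\<bar>/2))/q" using Q(1) by (intro divide_right_mono) auto
    also have "\<dots> = (2/\<bar>g0\<bar>)*(1 + 1/q)" using Q(1) g0nz by (simp add: field_simps)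
    also have "\<dots> \<le> (2/\<bar>g0\<bar>)*(1 + 2*Cc*E)" using iq by (intro mult_left_mono) auto
    finally show ?thesis .
  qed
  hence B0: "(1+\<bar>z\<bar>)/q \<le> 2*Cc*E + (2/\<bar>g0\<bar>)*(1 + 2*Cc*E)" using iq by (simp add: add_divide_distrib)
  have "(1+\<bar>z\<bar>)/(s*q) = ((1+\<bar>z\<bar>)/q) * (1/s)" by simp
  also have "\<dots> \<le> (2*Cc*E + (2/\<bar>g0\<bar>)*(1 + 2*Cc*E)) * (4/(3 * s0))"
  proof (rule mult_mono)
    show "1/s \<le> 4/(3 * s0)" using sp s0 by (simp add: field_simps)
    show "0 \<le> 2*Cc*E + (2/\<bar>g0\<bar>)*(1 + 2*Cc*E)" using Cc_pos by (simp add: E_def)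
    show "0 \<le> 1/s" using sp s0 by simp
  qed (use B0 in auto)
  finally have B: "(1+\<bar>z\<bar>)/(s*q) \<le> (4/(3 * s0))*(2*Cc*E + (2/\<bar>g0\<bar>)*(1 + 2*Cc*E))" by (simp add: mult.commute)
  show "\<bar>Ader g z\<bar> + (1+\<bar>z\<bar>)/(s*q) \<le> (4/g0^2)*(cL + \<bar>g0\<bar>*\<bar>vv x\<bar> + 1 + 2*Cc*exp(-g0* vv x))
        + (4/(3 * s0))*(2*Cc*exp(-g0* vv x) + (2/\<bar>g0\<bar>)*(1 + 2*Cc*exp(-g0* vv x)))"
    using A B by (simp add: E_def v_def)
qed

end


context gsetup begin

lemma z_bounds:
  assumes g00: "g0 = 0" and r: "reg e x g m s"
  defines "z \<equiv> (x-m)/s" and "q \<equiv> 1 + g*((x-m)/s)"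
  shows "0 < q" "1/q \<le> 18" "\<bar>z\<bar> \<le> (4/(3 * s0))*(s0*\<bar>vv x\<bar> + 1)"
    "max 0 (- z) \<le> (4/(3 * s0))*(1 + s0*max 0 (- vv x))"
    "\<bar>Lf g z\<bar> \<le> 18*\<bar>z\<bar>" "- Lf g z \<le> 18 * max 0 (- z)"
    "g \<noteq> 0 \<Longrightarrow> \<bar>Ader g z\<bar> + (1+\<bar>z\<bar>)/(s*q) \<le> 18*z^2 + (4/(3 * s0))*(18*(1+\<bar>z\<bar>))"
    "z^2/q + (1+\<bar>z\<bar>)*(4/(3 * s0)) \<le> 18*z^2 + (4/(3 * s0))*(18*(1+\<bar>z\<bar>))"
proof -
  note B = reg_basic[OF r, folded q_def]
  have v: "vv x = (x-m0)/s0" unfolding vv_def Lf_def using g00 by simp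
  have q0: "1 + g0*((x-m0)/s0) = 1" using g00 by simp
  show qp: "0 < q" by (rule B(7))
  have "1/18 \<le> q" using B(6) g00 q0 by simp
  thus iq: "1/q \<le> 18" using qp by (simp add: field_simps)
  have sp: "3 * s0/4 < s" by (rule B(1))
  have s0p: "0 < s" using sp s0 by linarith
  have iss: "1/s \<le> 4/(3 * s0)" using sp s0 by (simp add: field_simps)
  have mm: "\<bar>m - m0\<bar> \<le> 1" using B(4) e0 by linarith
  have xm: "\<bar>x - m\<bar> \<le> s0*\<bar>vv x\<bar> + 1"
  proof -
    have "\<bar>x-m0\<bar> = s0*\<bar>vv x\<bar>" using s0 v by (simp add: abs_divide)
    thus ?thesis using mm by linarith
  qed
  have "\<bar>z\<bar> = \<bar>x-m\<bar> * (1/s)" using s0p by (simp add: z_def abs_divide)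
  also have "\<dots> \<le> (s0*\<bar>vv x\<bar> + 1) * (4/(3 * s0))" using xm iss s0p s0 by (intro mult_mono) auto
  finally show az: "\<bar>z\<bar> \<le> (4/(3 * s0))*(s0*\<bar>vv x\<bar> + 1)" by (simp add: mult.commute)
  have mz: "max 0 (m - x) \<le> 1 + s0*max 0 (- vv x)"
  proof -
    have "m0 - x = s0 * (- vv x)" using s0 v by (simp add: field_simps)
    moreover have "s0 * (- vv x) \<le> s0*max 0 (- vv x)" using s0 by (intro mult_left_mono) auto
    moreover have "0 \<le> s0*max 0 (- vv x)" using s0 by simp
    ultimately show ?thesis using mm by (auto simp: abs_le_iff)
  qed
  have "max 0 (- z) = max 0 (m - x) * (1/s)" using s0p by (auto simp: z_def max_def field_simps)
  also have "\<dots> \<le> (1 + s0*max 0 (- vv x)) * (4/(3 * s0))" using mz iss s0p s0 by (intro mult_mono) auto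
  finally show "max 0 (- z) \<le> (4/(3 * s0))*(1 + s0*max 0 (- vv x))" by (simp add: mult.commute)
  have qz: "q = 1 + g*z" by (simp add: q_def z_def)
  have qp': "0 < 1 + g*z" using qp qz by simp
  note LB = Lf_bounds[OF qp', folded qz]
  have zq: "\<bar>z/q\<bar> \<le> 18*\<bar>z\<bar>"
  proof -
    have "\<bar>z/q\<bar> = \<bar>z\<bar>*(1/q)" using qp by (simp add: abs_divide)
    also have "\<dots> \<le> \<bar>z\<bar>*18" using iq by (intro mult_left_mono) auto
    finally show ?thesis by simp
  qed
  have l1: "-(18*\<bar>z\<bar>) \<le> z" "z \<le> 18*\<bar>z\<bar>" by (simp_all add: abs_if)
  have l2: "-(18*\<bar>z\<bar>) \<le> z/q" "z/q \<le> 18*\<bar>z\<bar>" using zq abs_ge_minus_self[of "z/q"] abs_ge_self[of "z/q"] by linarith+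
  have A: "-(18*\<bar>z\<bar>) \<le> min z (z/q)" "max z (z/q) \<le> 18*\<bar>z\<bar>" using l1 l2 by simp_all
  show "\<bar>Lf g z\<bar> \<le> 18*\<bar>z\<bar>" unfolding abs_le_iff using LB A by linarith
  have zq2: "- (z/q) \<le> 18 * max 0 (- z)"
  proof -
    have "- (z/q) = (- z)*(1/q)" by simp
    also have "\<dots> \<le> max 0 (- z) * (1/q)" using qp by (intro mult_right_mono) auto
    also have "\<dots> \<le> max 0 (- z) * 18" using iq by (intro mult_left_mono) auto
    finally show ?thesis by simp
  qed
  have "- z \<le> 18 * max 0 (- z)" by simp
  hence "- min z (z/q) \<le> 18 * max 0 (- z)" using zq2 by (simp add: min_def)
  thus "- Lf g z \<le> 18 * max 0 (- z)" using LB(1) by linarith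
  have z2q: "z^2/q \<le> 18*z^2"
  proof -
    have "z^2/q = z^2*(1/q)" by simp
    also have "\<dots> \<le> z^2*18" using iq by (intro mult_left_mono) auto
    finally show ?thesis by simp
  qed
  have t2: "(1+\<bar>z\<bar>)/(s*q) \<le> (4/(3 * s0))*(18*(1+\<bar>z\<bar>))"
  proof -
    have "(1+\<bar>z\<bar>)/(s*q) = (1/s)*((1+\<bar>z\<bar>)*(1/q))" by simp
    also have "\<dots> \<le> (4/(3 * s0))*((1+\<bar>z\<bar>)*18)"
      using iss iq s0p qp s0 by (intro mult_mono) auto
    finally show ?thesis by simp
  qed
  show "g \<noteq> 0 \<Longrightarrow> \<bar>Ader g z\<bar> + (1+\<bar>z\<bar>)/(s*q) \<le> 18*z^2 + (4/(3 * s0))*(18*(1+\<bar>z\<bar>))"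
    using Ader_bound1[OF _ qp', folded qz] z2q t2 by fastforce
  have "(1+\<bar>z\<bar>)*(4/(3 * s0)) \<le> (18*(1+\<bar>z\<bar>))*(4/(3 * s0))" using s0 by (intro mult_right_mono) auto
  hence "(1+\<bar>z\<bar>)*(4/(3 * s0)) \<le> (4/(3 * s0))*(18*(1+\<bar>z\<bar>))" by (simp only: mult.commute)
  thus "z^2/q + (1+\<bar>z\<bar>)*(4/(3 * s0)) \<le> 18*z^2 + (4/(3 * s0))*(18*(1+\<bar>z\<bar>))" using z2q by simp
qed

end


lemma lin_PP:
  fixes X a b d f v E P :: real
  assumes "0 \<le> a" "0 \<le> b" "0 \<le> d" "0 \<le> f"
    and X: "X \<le> a + b*\<bar>v\<bar> + d*(1+\<bar>v\<bar>)^2 + f*E"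
    and P: "P = (1+\<bar>v\<bar>)^2 + E" and E: "0 < E"
  shows "X \<le> (a+b+d+f) * P"
proof -
  have s1: "1 \<le> (1+\<bar>v\<bar>)^2" by (simp add: one_le_power)
  have s2: "\<bar>v\<bar> \<le> (1+\<bar>v\<bar>)^2"
  proof -
    have "\<bar>v\<bar> \<le> 1 + \<bar>v\<bar>" by simp
    also have "\<dots> = (1+\<bar>v\<bar>)*1" by simp
    also have "\<dots> \<le> (1+\<bar>v\<bar>)*(1+\<bar>v\<bar>)" by (intro mult_left_mono) auto
    also have "\<dots> = (1+\<bar>v\<bar>)^2" by (simp add: power2_eq_square)
    finally show ?thesis .
  qed
  have P1: "1 \<le> P" using P E s1 by linarith
  have "a*1 \<le> a*P" using assms P1 by (intro mult_left_mono) auto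
  hence "a \<le> a*P" by simp
  moreover have "b*\<bar>v\<bar> \<le> b*P" using assms s2 by (intro mult_left_mono) auto
  moreover have "d*(1+\<bar>v\<bar>)^2 \<le> d*P" using assms by (intro mult_left_mono) auto
  moreover have "f*E \<le> f*P" using assms by (intro mult_left_mono) auto
  ultimately show ?thesis using X by (simp add: algebra_simps)
qed

context gsetup begin

lemma PP_pos: "1 \<le> PP x"
proof -
  have "1 \<le> (1+\<bar>vv x\<bar>)^2" by (simp add: one_le_power)
  thus ?thesis unfolding PP_def by (smt (verit) exp_gt_zero)
qed

lemma iface:
  "\<exists>c \<beta>. 0 < c \<and> 0 \<le> \<beta> \<and> (\<forall>e x g m s. reg e x g m s \<longrightarrow>
     \<bar>Lf g ((x-m)/s)\<bar> \<le> c * PP x \<and>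
     exp (- Lf g ((x-m)/s)) \<le> c * exp (\<beta> * max 0 (- vv x)) \<and>
     (g \<noteq> 0 \<longrightarrow> \<bar>Ader g ((x-m)/s)\<bar> + (1+\<bar>(x-m)/s\<bar>)/(s*(1+g*((x-m)/s))) \<le> c * PP x) \<and>
     (g0 = 0 \<longrightarrow> ((x-m)/s)^2/(1+g*((x-m)/s)) + (1+\<bar>(x-m)/s\<bar>)*(4/(3 * s0)) \<le> c * PP x))"
proof (cases "g0 = 0")
  case False
  define cw where "cw = 2*cL/\<bar>g0\<bar> + 2"
  define ce where "ce = exp (2*cL/\<bar>g0\<bar>)"
  define aA where "aA = (4/g0^2)*(cL+1) + (4/(3 * s0))*(2/\<bar>g0\<bar>)"
  define bA where "bA = (4/g0^2)*\<bar>g0\<bar>"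
  define fA where "fA = (4/g0^2)*(2*Cc) + (4/(3 * s0))*(2*Cc + (2/\<bar>g0\<bar>)*(2*Cc))"
  have pos: "0 \<le> cw" "0 < ce" "0 \<le> aA" "0 \<le> bA" "0 \<le> fA"
    using cL_nn s0 Cc_pos False by (auto simp: cw_def ce_def aA_def bA_def fA_def)
  define c where "c = cw + ce + (aA + bA + 0 + fA)"
  have cpos: "0 < c" using pos by (simp add: c_def)
  show ?thesis
  proof (intro exI conjI allI impI)
    show "0 < c" by (rule cpos)
    show "0 \<le> (2::real)" by simp
    fix e x g m s assume r: "reg e x g m s"
    note W = nz_w[OF False r]
    have PP1: "1 \<le> PP x" by (rule PP_pos)
    have "\<bar>Lf g ((x-m)/s)\<bar> \<le> (2*cL/\<bar>g0\<bar> + 2 + 0 + 0) * PP x"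
      by (rule lin_PP[where v="vv x" and E="exp (- g0 * vv x)"]) (use W(1) cL_nn in \<open>auto simp: PP_def\<close>)
    also have "\<dots> \<le> c * PP x" using pos PP1 by (intro mult_right_mono) (auto simp: c_def cw_def)
    finally show "\<bar>Lf g ((x-m)/s)\<bar> \<le> c * PP x" .
    have "exp (- Lf g ((x-m)/s)) \<le> exp (2*cL/\<bar>g0\<bar> + 2*max 0 (- vv x))" using W(2) by simp
    also have "\<dots> = ce * exp (2 * max 0 (- vv x))" by (simp add: ce_def exp_add)
    also have "\<dots> \<le> c * exp (2 * max 0 (- vv x))" using pos by (intro mult_right_mono) (auto simp: c_def)
    finally show "exp (- Lf g ((x-m)/s)) \<le> c * exp (2 * max 0 (- vv x))" .
    show "\<bar>Ader g ((x-m)/s)\<bar> + (1+\<bar>(x-m)/s\<bar>)/(s*(1+g*((x-m)/s))) \<le> c * PP x" if "g \<noteq> 0"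
    proof -
      have "\<bar>Ader g ((x-m)/s)\<bar> + (1+\<bar>(x-m)/s\<bar>)/(s*(1+g*((x-m)/s))) \<le> (aA + bA + 0 + fA) * PP x"
      proof (rule lin_PP[where v="vv x" and E="exp (- g0 * vv x)"])
        show "\<bar>Ader g ((x-m)/s)\<bar> + (1+\<bar>(x-m)/s\<bar>)/(s*(1+g*((x-m)/s))) \<le> aA + bA*\<bar>vv x\<bar> + 0*(1+\<bar>vv x\<bar>)^2 + fA*exp (- g0 * vv x)"
        proof -
          have eqR: "(4/g0^2)*(cL + \<bar>g0\<bar>*\<bar>vv x\<bar> + 1 + 2*Cc*exp(-g0* vv x))
            + (4/(3 * s0))*(2*Cc*exp(-g0* vv x) + (2/\<bar>g0\<bar>)*(1 + 2*Cc*exp(-g0* vv x)))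
            = aA + bA*\<bar>vv x\<bar> + 0*(1+\<bar>vv x\<bar>)^2 + fA*exp (- g0 * vv x)"
            using False s0 by (simp add: aA_def bA_def fA_def field_simps)
          show ?thesis using W(3) eqR by linarith
        qed
      qed (use pos in \<open>auto simp: PP_def\<close>)
      also have "\<dots> \<le> c * PP x" using pos PP1 by (intro mult_right_mono) (auto simp: c_def)
      finally show "\<bar>Ader g ((x-m)/s)\<bar> + (1+\<bar>(x-m)/s\<bar>)/(s*(1+g*((x-m)/s))) \<le> c * PP x" .
    qed
    show "((x-m)/s)^2/(1+g*((x-m)/s)) + (1+\<bar>(x-m)/s\<bar>)*(4/(3 * s0)) \<le> c * PP x" if "g0 = 0"
      using False that by simp
  qed
next
  case True
  define K where "K = 4/3 + 4/(3 * s0)"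
  have Kp: "0 < K" using s0 unfolding K_def by (smt (verit) divide_pos_pos)
  define cw where "cw = 24/s0 + 24"
  define ce where "ce = exp (24/s0)"
  define aA where "aA = 24/s0 + 24*K/s0"
  define bA where "bA = 24*K/s0"
  define dA where "dA = 18*K^2"
  have pos: "0 \<le> cw" "0 < ce" "0 \<le> aA" "0 \<le> bA" "0 \<le> dA"
    using s0 Kp by (auto simp: cw_def ce_def aA_def bA_def dA_def)
  define c where "c = cw + ce + (aA + bA + dA + 0)"
  have cpos: "0 < c" using pos by (simp add: c_def)
  show ?thesis
  proof (intro exI conjI allI impI)
    show "0 < c" by (rule cpos)
    show "0 \<le> (24::real)" by simp
    fix e x g m s assume r: "reg e x g m s"
    define z where "z = (x-m)/s"
    note Z = z_bounds[OF True r, folded z_def]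
    have PP1: "1 \<le> PP x" by (rule PP_pos)
    have PPe: "PP x = (1+\<bar>vv x\<bar>)^2 + exp (- g0 * vv x)" by (simp add: PP_def)
    have Ep: "0 < exp (- g0 * vv x)" by simp
    have azl: "\<bar>z\<bar> \<le> (4/3)*\<bar>vv x\<bar> + 4/(3 * s0)"
      using Z(3) s0 by (simp add: field_simps)
    have azK: "\<bar>z\<bar> \<le> K*(1+\<bar>vv x\<bar>)"
    proof -
      have h1: "K*(1+\<bar>vv x\<bar>) = (4/3)*\<bar>vv x\<bar> + 4/(3 * s0) + (4/3 + (4/(3 * s0))*\<bar>vv x\<bar>)"
        by (simp add: K_def algebra_simps add_divide_distrib)
      have h2: "0 \<le> 4/3 + (4/(3 * s0))*\<bar>vv x\<bar>" using s0 by simp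
      have "(4/3)*\<bar>vv x\<bar> + 4/(3 * s0) \<le> K*(1+\<bar>vv x\<bar>)" using h1 h2 by linarith
      thus ?thesis using azl by linarith
    qed
    have z2: "z^2 \<le> K^2*(1+\<bar>vv x\<bar>)^2"
    proof -
      have "\<bar>z\<bar>^2 \<le> (K*(1+\<bar>vv x\<bar>))^2" using azK by (intro power_mono) auto
      thus ?thesis by (simp add: power_mult_distrib)
    qed
    have "\<bar>Lf g z\<bar> \<le> 24/s0 + 24*\<bar>vv x\<bar> + 0*(1+\<bar>vv x\<bar>)^2 + 0*exp (- g0 * vv x)"
    proof -
      have "18*((4/3)*\<bar>vv x\<bar> + 4/(3 * s0)) = 24*\<bar>vv x\<bar> + 24/s0" by simp
      thus ?thesis using Z(5) azl by simp
    qed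
    note hL = this
    have "\<bar>Lf g z\<bar> \<le> (24/s0 + 24 + 0 + 0) * PP x"
      by (rule lin_PP[OF _ _ _ _ hL PPe Ep]) (use s0 in auto)
    also have "\<dots> \<le> c * PP x" using pos PP1 by (intro mult_right_mono) (auto simp: c_def cw_def)
    finally show "\<bar>Lf g ((x-m)/s)\<bar> \<le> c * PP x" by (simp add: z_def)
    have "- Lf g z \<le> 18 * ((4/(3 * s0))*(1 + s0*max 0 (- vv x)))"
      using Z(6) Z(4) by linarith
    also have "\<dots> = 24/s0 + 24 * max 0 (- vv x)" using s0 by (simp add: field_simps)
    finally have "exp (- Lf g z) \<le> exp (24/s0 + 24 * max 0 (- vv x))" by simp
    also have "\<dots> = ce * exp (24 * max 0 (- vv x))" by (simp add: ce_def exp_add)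
    also have "\<dots> \<le> c * exp (24 * max 0 (- vv x))" using pos by (intro mult_right_mono) (auto simp: c_def)
    finally show "exp (- Lf g ((x-m)/s)) \<le> c * exp (24 * max 0 (- vv x))" by (simp add: z_def)
    have main: "18*z^2 + (4/(3 * s0))*(18*(1+\<bar>z\<bar>)) \<le> c * PP x"
    proof -
      have "18*z^2 + (4/(3 * s0))*(18*(1+\<bar>z\<bar>)) = 18*z^2 + 24/s0 + (24/s0)*\<bar>z\<bar>" using s0
        by (simp add: field_simps)
      also have "\<dots> \<le> 18*(K^2*(1+\<bar>vv x\<bar>)^2) + 24/s0 + (24/s0)*(K*(1+\<bar>vv x\<bar>))"
        using z2 azK s0 by (intro add_mono mult_left_mono) auto
      also have "\<dots> = aA + bA*\<bar>vv x\<bar> + dA*(1+\<bar>vv x\<bar>)^2 + 0*exp (- g0 * vv x)"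
        by (simp add: aA_def bA_def dA_def algebra_simps)
      finally have hM: "18*z^2 + (4/(3 * s0))*(18*(1+\<bar>z\<bar>)) \<le> aA + bA*\<bar>vv x\<bar> + dA*(1+\<bar>vv x\<bar>)^2 + 0*exp (- g0 * vv x)" .
      have "18*z^2 + (4/(3 * s0))*(18*(1+\<bar>z\<bar>)) \<le> (aA+bA+dA+0) * PP x"
        by (rule lin_PP[OF _ _ _ _ hM PPe Ep]) (use pos in auto)
      also have "\<dots> \<le> c * PP x" using pos PP1 by (intro mult_right_mono) (auto simp: c_def)
      finally show ?thesis .
    qed
    show "\<bar>Ader g ((x-m)/s)\<bar> + (1+\<bar>(x-m)/s\<bar>)/(s*(1+g*((x-m)/s))) \<le> c * PP x" if "g \<noteq> 0"
      using Z(7)[OF that] main unfolding z_def by linarith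
    show "((x-m)/s)^2/(1+g*((x-m)/s)) + (1+\<bar>(x-m)/s\<bar>)*(4/(3 * s0)) \<le> c * PP x" if "g0 = 0"
      using Z(8) main unfolding z_def by linarith
  qed
qed

end


context gsetup begin

lemma reg_convex:
  assumes r1: "reg e x g1 m1 s1" and r2: "reg e x g2 m2 s2" and t: "0 \<le> t" "t \<le> 1"
  shows "reg e x (g2 + t*(g1-g2)) (m2 + t*(m1-m2)) (s2 + t*(s1-s2))"
proof -
  have n1: "norm ((g1,m1,s1) - (g0,m0,s0)) < e" and n2: "norm ((g2,m2,s2) - (g0,m0,s0)) < e"
    using r1 r2 by (auto simp: reg_def)
  have eq: "(g2 + t*(g1-g2), m2 + t*(m1-m2), s2 + t*(s1-s2)) - (g0,m0,s0)
      = (1-t) *\<^sub>R ((g2,m2,s2) - (g0,m0,s0)) + t *\<^sub>R ((g1,m1,s1) - (g0,m0,s0))"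
    by (simp add: algebra_simps)
  have "norm ((g2 + t*(g1-g2), m2 + t*(m1-m2), s2 + t*(s1-s2)) - (g0,m0,s0))
      \<le> norm ((1-t) *\<^sub>R ((g2,m2,s2) - (g0,m0,s0))) + norm (t *\<^sub>R ((g1,m1,s1) - (g0,m0,s0)))"
    unfolding eq by (rule norm_triangle_ineq)
  also have "\<dots> = (1-t) * norm ((g2,m2,s2) - (g0,m0,s0)) + t * norm ((g1,m1,s1) - (g0,m0,s0))"
    using t by (simp only: norm_scaleR)
  finally have le: "norm ((g2 + t*(g1-g2), m2 + t*(m1-m2), s2 + t*(s1-s2)) - (g0,m0,s0))
      \<le> (1-t) * norm ((g2,m2,s2) - (g0,m0,s0)) + t * norm ((g1,m1,s1) - (g0,m0,s0))" .
  have "(1-t) * norm ((g2,m2,s2) - (g0,m0,s0)) + t * norm ((g1,m1,s1) - (g0,m0,s0)) < (1-t)*e + t*e"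
  proof (cases "t = 0")
    case True thus ?thesis using n2 by simp
  next
    case False
    hence "t * norm ((g1,m1,s1) - (g0,m0,s0)) < t*e" using t n1 by simp
    moreover have "(1-t) * norm ((g2,m2,s2) - (g0,m0,s0)) \<le> (1-t)*e" using t n2 by (intro mult_left_mono) auto
    ultimately show ?thesis by linarith
  qed
  also have "(1-t)*e + t*e = e" by (simp add: algebra_simps)
  finally have "norm ((g2 + t*(g1-g2), m2 + t*(m1-m2), s2 + t*(s1-s2)) - (g0,m0,s0)) < e"
    using le by linarith
  thus ?thesis using r1 by (auto simp: reg_def)
qed


definition IFc where
  "IFc c \<beta> \<longleftrightarrow> 0 < c \<and> 0 \<le> \<beta> \<and> (\<forall>e x g m s. reg e x g m s \<longrightarrow>
     \<bar>Lf g ((x-m)/s)\<bar> \<le> c * PP x \<and>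
     exp (- Lf g ((x-m)/s)) \<le> c * exp (\<beta> * max 0 (- vv x)) \<and>
     (g \<noteq> 0 \<longrightarrow> \<bar>Ader g ((x-m)/s)\<bar> + (1+\<bar>(x-m)/s\<bar>)/(s*(1+g*((x-m)/s))) \<le> c * PP x) \<and>
     (g0 = 0 \<longrightarrow> ((x-m)/s)^2/(1+g*((x-m)/s)) + (1+\<bar>(x-m)/s\<bar>)*(4/(3 * s0)) \<le> c * PP x))"

lemma IFc_ex: "\<exists>c \<beta>. IFc c \<beta>"
  using iface unfolding IFc_def by blast

lemma IFc_D:
  assumes "IFc c \<beta>" "reg e x g m s"
  shows "0 < c" "0 \<le> \<beta>" "\<bar>Lf g ((x-m)/s)\<bar> \<le> c * PP x"
    "exp (- Lf g ((x-m)/s)) \<le> c * exp (\<beta> * max 0 (- vv x))"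
    "g \<noteq> 0 \<Longrightarrow> \<bar>Ader g ((x-m)/s)\<bar> + (1+\<bar>(x-m)/s\<bar>)/(s*(1+g*((x-m)/s))) \<le> c * PP x"
    "g0 = 0 \<Longrightarrow> ((x-m)/s)^2/(1+g*((x-m)/s)) + (1+\<bar>(x-m)/s\<bar>)*(4/(3 * s0)) \<le> c * PP x"
  using assms unfolding IFc_def by blast+

lemma w_direct:
  assumes c: "IFc c \<beta>" and g00: "g0 = 0" and r: "reg e x g m s" and r': "reg e x 0 m' s'"
  shows "\<bar>Lf g ((x-m)/s) - Lf 0 ((x-m')/s')\<bar> \<le> 2*c*PP x * norm ((g,m,s) - (0,m',s'))"
proof -
  define z where "z = (x-m)/s"
  define z' where "z' = (x-m')/s'"
  define q where "q = 1 + g*z"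
  define N where "N = norm ((g,m,s) - (0,m',s'))"
  have Nb: "\<bar>g\<bar> \<le> N" "\<bar>m'-m\<bar> \<le> N" "\<bar>s'-s\<bar> \<le> N"
    using norm3_ge[where a="g" and b="m-m'" and c="s-s'"] by (auto simp: N_def abs_minus_commute)
  have B: "3 * s0/4 < s" "3 * s0/4 < s'" using reg_basic(1)[OF r] reg_basic(1)[OF r'] by auto
  have sp: "0 < s" using B s0 by linarith
  have qp: "0 < q" using reg_basic(7)[OF r] by (simp add: q_def z_def)
  have I1: "z^2/q + (1+\<bar>z\<bar>)*(4/(3 * s0)) \<le> c * PP x" using IFc_D(6)[OF c r g00]
    by (simp add: q_def z_def)
  have I2: "z'^2/(1+0*z') + (1+\<bar>z'\<bar>)*(4/(3 * s0)) \<le> c * PP x" using IFc_D(6)[OF c r' g00]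
    by (simp add: z'_def)
  have nn1: "0 \<le> (1+\<bar>z\<bar>)*(4/(3 * s0))" using s0 by simp
  have nn2: "0 \<le> z'^2/(1+0*z')" by simp
  have lz: "Lf 0 z' = z'" by (simp add: Lf_def)
  have t1: "\<bar>Lf g z - z\<bar> \<le> N * (z^2/q)"
  proof -
    have "\<bar>Lf g z - z\<bar> \<le> \<bar>g\<bar> * z^2 / q" using Lf_minus_z[of g z] qp by (simp add: q_def)
    also have "\<dots> = \<bar>g\<bar> * (z^2/q)" by simp
    also have "\<dots> \<le> N * (z^2/q)" using Nb qp by (intro mult_right_mono) auto
    finally show ?thesis .
  qed
  have t2: "\<bar>z - z'\<bar> \<le> N * ((1+\<bar>z'\<bar>)*(4/(3 * s0)))"
  proof -
    have "z - z' = ((m'-m) + z'*(s'-s))/s" using sp B s0 by (simp add: z_def z'_def field_simps)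
    hence "\<bar>z - z'\<bar> = \<bar>(m'-m) + z'*(s'-s)\<bar> * (1/s)" using sp by (simp add: abs_divide)
    also have "\<dots> \<le> (N*(1+\<bar>z'\<bar>)) * (4/(3 * s0))"
    proof (rule mult_mono)
      have "\<bar>(m'-m) + z'*(s'-s)\<bar> \<le> \<bar>m'-m\<bar> + \<bar>z'\<bar>*\<bar>s'-s\<bar>" using abs_mult[of z' "s'-s"] by arith
      also have "\<dots> \<le> N + \<bar>z'\<bar>*N" using Nb by (intro add_mono mult_left_mono) auto
      finally show "\<bar>(m'-m) + z'*(s'-s)\<bar> \<le> N*(1+\<bar>z'\<bar>)" by (simp add: algebra_simps)
      show "1/s \<le> 4/(3 * s0)" using B s0 sp by (simp add: field_simps)
      show "0 \<le> N*(1+\<bar>z'\<bar>)" using Nb by simp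
      show "0 \<le> 1/s" using sp by simp
    qed
    finally show ?thesis by (simp add: algebra_simps)
  qed
  have "\<bar>Lf g z - Lf 0 z'\<bar> \<le> \<bar>Lf g z - z\<bar> + \<bar>z - z'\<bar>" using lz by simp
  also have "\<dots> \<le> N * (z^2/q) + N * ((1+\<bar>z'\<bar>)*(4/(3 * s0)))" using t1 t2 by simp
  also have "\<dots> \<le> N * (c * PP x) + N * (c * PP x)"
  proof -
    have A1: "z^2/q \<le> c * PP x" using I1 nn1 by linarith
    have A2: "(1+\<bar>z'\<bar>)*(4/(3 * s0)) \<le> c * PP x" using I2 nn2 by linarith
    show ?thesis using A1 A2 Nb by (intro add_mono mult_left_mono) auto
  qed
  finally show ?thesis by (simp add: z_def z'_def N_def algebra_simps)
qed


lemma w_same: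
  assumes c: "IFc c \<beta>" and r1: "reg e x g1 m1 s1" and r2: "reg e x g2 m2 s2" and gg: "0 < g1*g2"
  shows "\<bar>Lf g1 ((x-m1)/s1) - Lf g2 ((x-m2)/s2)\<bar> \<le> c*PP x * norm ((g1,m1,s1) - (g2,m2,s2))"
proof -
  have g1: "g1 \<noteq> 0" and g2: "g2 \<noteq> 0" using gg by auto
  have Gnz: "g2 + t*(g1-g2) \<noteq> 0" if t: "0 \<le> t" "t \<le> 1" for t
  proof -
    have e: "g2 + t*(g1-g2) = (1-t)*g2 + t*g1" by (simp add: algebra_simps)
    show ?thesis
    proof (cases "g1 > 0")
      case True
      hence "g2 > 0" using gg by (simp add: zero_less_mult_iff)
      have a: "0 \<le> (1-t)*g2" using t \<open>g2 > 0\<close> by simp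
      have b: "0 \<le> t*g1" using t True by simp
      have "0 < (1-t)*g2 \<or> 0 < t*g1" using t True \<open>g2 > 0\<close> by (cases "t = 0") auto
      hence "0 < (1-t)*g2 + t*g1" using a b by linarith
      thus ?thesis using e by simp
    next
      case False
      hence n1: "g1 < 0" using g1 by simp
      hence n2: "g2 < 0" using gg by (simp add: zero_less_mult_iff)
      have "(1-t)*g2 \<le> 0" using t n2 by (simp add: mult_nonneg_nonpos)
      moreover have "t*g1 \<le> 0" using t n1 by (simp add: mult_nonneg_nonpos)
      moreover have "(1-t)*g2 < 0 \<or> t*g1 < 0" using t n1 n2
        by (cases "t = 0") (auto simp: mult_pos_neg)
      ultimately have "(1-t)*g2 + t*g1 < 0" by linarith
      thus ?thesis using e by simp
    qed
  qed
  have "\<bar>ln (1+g1*((x-m1)/s1))/g1 - ln (1+g2*((x-m2)/s2))/g2\<bar> \<le> (c*PP x) * norm ((g1,m1,s1) - (g2,m2,s2))"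
  proof (rule seg_mvt)
    fix t :: real assume t: "0 \<le> t" "t \<le> 1"
    note rt = reg_convex[OF r1 r2 t]
    show "0 < s2 + t*(s1-s2) \<and> 0 < 1 + (g2 + t*(g1-g2)) * ((x - (m2 + t*(m1-m2)))/(s2 + t*(s1-s2))) \<and> g2 + t*(g1-g2) \<noteq> 0"
      using reg_basic(1,7)[OF rt] s0 Gnz[OF t] by auto
    show "\<bar>Ader (g2 + t*(g1-g2)) ((x - (m2 + t*(m1-m2)))/(s2 + t*(s1-s2)))\<bar> + (1 + \<bar>(x - (m2 + t*(m1-m2)))/(s2 + t*(s1-s2))\<bar>) / ((s2 + t*(s1-s2)) * (1 + (g2 + t*(g1-g2)) * ((x - (m2 + t*(m1-m2)))/(s2 + t*(s1-s2))))) \<le> c*PP x"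
      using IFc_D(5)[OF c rt Gnz[OF t]] by simp
  qed
  thus ?thesis using g1 g2 by (simp add: Lf_def)
qed

lemma w_lip:
  assumes c: "IFc c \<beta>" and r1: "reg e x g1 m1 s1" and r2: "reg e x g2 m2 s2"
  shows "\<bar>Lf g1 ((x-m1)/s1) - Lf g2 ((x-m2)/s2)\<bar> \<le> 2*c*PP x * norm ((g1,m1,s1) - (g2,m2,s2))"
proof -
  have cp: "0 < c" using IFc_D(1)[OF c r1] .
  have P1: "1 \<le> PP x" by (rule PP_pos)
  define N where "N = norm ((g1,m1,s1) - (g2,m2,s2))"
  show ?thesis
  proof (cases "0 < g1*g2")
    case True
    have "\<bar>Lf g1 ((x-m1)/s1) - Lf g2 ((x-m2)/s2)\<bar> \<le> c*PP x * N" using w_same[OF c r1 r2 True] by (simp add: N_def)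
    also have "\<dots> \<le> 2*c*PP x * N" using cp P1 by (intro mult_right_mono) (auto simp: N_def)
    finally show ?thesis by (simp add: N_def)
  next
    case False
    have g00: "g0 = 0"
    proof (rule ccontr)
      assume "g0 \<noteq> 0"
      hence "0 < g1*g0" "0 < g2*g0" using nz_g(2)[OF _ r1] nz_g(2)[OF _ r2] by auto
      hence "0 < (g1*g0)*(g2*g0)" by simp
      hence "0 < (g1*g2)*(g0*g0)" by (simp add: algebra_simps)
      thus False using False by (simp add: zero_less_mult_iff)
    qed
    obtain t where t: "0 \<le> t" "t \<le> 1" "g2 + t*(g1-g2) = 0"
    proof (cases "g1 = g2")
      case True
      hence "g1 = 0" using False by (simp add: zero_less_mult_iff not_less)
      thus ?thesis using that[of 0] True by simp
    next
      case ne: False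
      define t where "t = g2/(g2-g1)"
      have "g2 + t*(g1-g2) = 0" using ne by (simp add: t_def field_simps)
      moreover have "0 \<le> t \<and> t \<le> 1"
      proof (cases "g2 \<le> g1")
        case True
        hence lt: "g2 < g1" using ne by simp
        have "g2 \<le> 0" "0 \<le> g1" using False lt by (auto simp: zero_less_mult_iff not_less)
        thus ?thesis using lt by (simp add: t_def divide_le_eq le_divide_eq divide_nonpos_neg)
      next
        case False2: False
        hence lt: "g1 < g2" by simp
        have "g1 \<le> 0" "0 \<le> g2" using False lt by (auto simp: zero_less_mult_iff not_less)
        thus ?thesis using lt by (simp add: t_def divide_le_eq le_divide_eq)
      qed
      ultimately show ?thesis using that by blast
    qed
    define ms where "ms = m2 + t*(m1-m2)"
    define ss where "ss = s2 + t*(s1-s2)"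
    have rs: "reg e x 0 ms ss" using reg_convex[OF r1 r2 t(1,2)] t(3) by (simp add: ms_def ss_def)
    have d1: "\<bar>Lf g1 ((x-m1)/s1) - Lf 0 ((x-ms)/ss)\<bar> \<le> 2*c*PP x * norm ((g1,m1,s1) - (0,ms,ss))"
      by (rule w_direct[OF c g00 r1 rs])
    have d2: "\<bar>Lf g2 ((x-m2)/s2) - Lf 0 ((x-ms)/ss)\<bar> \<le> 2*c*PP x * norm ((g2,m2,s2) - (0,ms,ss))"
      by (rule w_direct[OF c g00 r2 rs])
    have e1: "(g1,m1,s1) - (0,ms,ss) = (1-t) *\<^sub>R ((g1,m1,s1) - (g2,m2,s2))"
      using t(3) by (simp add: ms_def ss_def algebra_simps)
    have e2: "(g2,m2,s2) - (0,ms,ss) = (-t) *\<^sub>R ((g1,m1,s1) - (g2,m2,s2))"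
      using t(3) by (simp add: ms_def ss_def algebra_simps)
    have n1: "norm ((g1,m1,s1) - (0,ms,ss)) = (1-t)*N" unfolding e1 norm_scaleR N_def using t by simp
    have n2: "norm ((g2,m2,s2) - (0,ms,ss)) = t*N" unfolding e2 norm_scaleR N_def using t by simp
    have "\<bar>Lf g1 ((x-m1)/s1) - Lf g2 ((x-m2)/s2)\<bar> \<le> \<bar>Lf g1 ((x-m1)/s1) - Lf 0 ((x-ms)/ss)\<bar> + \<bar>Lf g2 ((x-m2)/s2) - Lf 0 ((x-ms)/ss)\<bar>"
      by simp
    also have "\<dots> \<le> 2*c*PP x * ((1-t)*N) + 2*c*PP x * (t*N)" using d1 d2 n1 n2 by simp
    also have "\<dots> = 2*c*PP x * N" by (simp add: algebra_simps)
    finally show ?thesis by (simp add: N_def)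
  qed
qed

end


lemma exp_diff: "\<bar>exp (a::real) - exp b\<bar> \<le> max (exp a) (exp b) * \<bar>a - b\<bar>"
proof -
  have key: "exp u - exp v \<le> exp u * (u - v)" if "v \<le> u" for u v :: real
  proof -
    have "1 + (v-u) \<le> exp (v-u)" by (rule exp_ge_add_one_self)
    hence "exp u * (1 + (v-u)) \<le> exp u * exp (v-u)" by (intro mult_left_mono) auto
    hence "exp u * (1 + (v-u)) \<le> exp v" by (simp add: exp_add[symmetric])
    thus ?thesis by (simp add: algebra_simps)
  qed
  show ?thesis
  proof (cases "b \<le> a")
    case True
    have "exp b \<le> exp a" using True by simp
    thus ?thesis using key[OF True] True by (simp add: max_def)
  next
    case False
    have "exp a \<le> exp b" using False by simp
    thus ?thesis using key[of a b] False by (simp add: max_def abs_minus_commute)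
  qed
qed

lemma ln_diff:
  assumes "0 < (a::real)" "0 < b"
  shows "\<bar>ln a - ln b\<bar> \<le> \<bar>a - b\<bar> / min a b"
proof -
  have k: "ln u - ln v \<le> (u - v)/v" if "0 < u" "0 < v" for u v :: real
  proof -
    have "ln (u/v) \<le> u/v - 1" using that by (intro ln_le_minus_one) auto
    thus ?thesis using that by (simp add: ln_div diff_divide_distrib)
  qed
  have "ln a - ln b \<le> \<bar>a - b\<bar> / min a b"
  proof -
    have "ln a - ln b \<le> (a-b)/b" by (rule k[OF assms])
    also have "\<dots> \<le> \<bar>a-b\<bar>/b" using assms by (simp add: divide_right_mono)
    also have "\<dots> \<le> \<bar>a-b\<bar>/min a b" using assms by (intro divide_left_mono) auto
    finally show ?thesis .
  qed
  moreover have "ln b - ln a \<le> \<bar>a - b\<bar> / min a b"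
  proof -
    have "ln b - ln a \<le> (b-a)/a" by (rule k) (use assms in auto)
    also have "\<dots> \<le> \<bar>a-b\<bar>/a" using assms by (simp add: divide_right_mono)
    also have "\<dots> \<le> \<bar>a-b\<bar>/min a b" using assms by (intro divide_left_mono) auto
    finally show ?thesis .
  qed
  ultimately show ?thesis by (simp add: abs_le_iff)
qed

context gsetup begin

lemma ll_lip:
  assumes c: "IFc c \<beta>" and r1: "reg e x g1 m1 s1" and r2: "reg e x g2 m2 s2"
  shows "\<bar>gev_loglik (g1,m1,s1) x - gev_loglik (g2,m2,s2) x\<bar>
     \<le> (4/(3 * s0) + 2*c*c + c + 2*c*(\<bar>g0\<bar>+2)) * exp (\<beta> * max 0 (- vv x)) * PP x * norm ((g1,m1,s1) - (g2,m2,s2))"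
proof -
  define N where "N = norm ((g1,m1,s1) - (g2,m2,s2))"
  define w1 where "w1 = Lf g1 ((x-m1)/s1)"
  define w2 where "w2 = Lf g2 ((x-m2)/s2)"
  define E where "E = exp (\<beta> * max 0 (- vv x))"
  have cp: "0 < c" and bp: "0 \<le> \<beta>" using IFc_D(1,2)[OF c r1] by auto
  have E1: "1 \<le> E" using bp by (simp add: E_def)
  have P1: "1 \<le> PP x" by (rule PP_pos)
  have Nb: "\<bar>g1-g2\<bar> \<le> N" "\<bar>s1-s2\<bar> \<le> N" "0 \<le> N"
    using norm3_ge[where a="g1-g2" and b="m1-m2" and c="s1-s2"] by (auto simp: N_def)
  have B1: "3 * s0/4 < s1" "0 < 1 + g1*((x-m1)/s1)" using reg_basic(1,7)[OF r1] by auto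
  have B2: "3 * s0/4 < s2" "0 < 1 + g2*((x-m2)/s2)" using reg_basic(1,7)[OF r2] by auto
  have sp: "0 < s1" "0 < s2" using B1 B2 s0 by linarith+
  have l1: "gev_loglik (g1,m1,s1) x = - ln s1 - exp (- w1) - (g1+1) * w1"
    using loglik_eq[OF sp(1) B1(2)] by (simp add: w1_def)
  have l2: "gev_loglik (g2,m2,s2) x = - ln s2 - exp (- w2) - (g2+1) * w2"
    using loglik_eq[OF sp(2) B2(2)] by (simp add: w2_def)
  have W: "\<bar>w1 - w2\<bar> \<le> 2*c*PP x * N" using w_lip[OF c r1 r2] by (simp add: w1_def w2_def N_def)
  have aw1: "\<bar>w1\<bar> \<le> c * PP x" using IFc_D(3)[OF c r1] by (simp add: w1_def)
  have ew: "max (exp (- w1)) (exp (- w2)) \<le> c * E"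
    using IFc_D(4)[OF c r1] IFc_D(4)[OF c r2] by (simp add: w1_def w2_def E_def)
  have g2b: "\<bar>g2 + 1\<bar> \<le> \<bar>g0\<bar> + 2" using reg_basic(3)[OF r2] e0 by linarith
  have T1: "\<bar>ln s1 - ln s2\<bar> \<le> N * (4/(3 * s0))"
  proof -
    have "\<bar>ln s1 - ln s2\<bar> \<le> \<bar>s1 - s2\<bar> / min s1 s2" by (rule ln_diff[OF sp])
    also have "\<dots> = \<bar>s1 - s2\<bar> * (1 / min s1 s2)" by simp
    also have "\<dots> \<le> N * (4/(3 * s0))"
    proof (rule mult_mono)
      show "1 / min s1 s2 \<le> 4/(3 * s0)" using B1 B2 s0 sp by (auto simp: min_def field_simps)
    qed (use Nb s0 sp in auto)
    finally show ?thesis .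
  qed
  have T2: "\<bar>exp (- w1) - exp (- w2)\<bar> \<le> (c*E) * (2*c*PP x * N)"
  proof -
    have "\<bar>exp (- w1) - exp (- w2)\<bar> \<le> max (exp (- w1)) (exp (- w2)) * \<bar>(- w1) - (- w2)\<bar>" by (rule exp_diff)
    also have "\<dots> \<le> (c*E) * (2*c*PP x * N)" using ew W cp E1 by (intro mult_mono) auto
    finally show ?thesis .
  qed
  have T3: "\<bar>(g1+1)*w1 - (g2+1)*w2\<bar> \<le> N * (c*PP x) + (\<bar>g0\<bar>+2) * (2*c*PP x * N)"
  proof -
    have "(g1+1)*w1 - (g2+1)*w2 = (g1-g2)*w1 + (g2+1)*(w1-w2)" by (simp add: algebra_simps)
    hence "\<bar>(g1+1)*w1 - (g2+1)*w2\<bar> \<le> \<bar>g1-g2\<bar>*\<bar>w1\<bar> + \<bar>g2+1\<bar>*\<bar>w1-w2\<bar>"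
      by (simp add: abs_mult[symmetric] abs_triangle_ineq)
    also have "\<dots> \<le> N * (c*PP x) + (\<bar>g0\<bar>+2) * (2*c*PP x * N)"
      using Nb aw1 g2b W by (intro add_mono mult_mono) auto
    finally show ?thesis .
  qed
  have "\<bar>gev_loglik (g1,m1,s1) x - gev_loglik (g2,m2,s2) x\<bar>
     \<le> \<bar>ln s1 - ln s2\<bar> + \<bar>exp (- w1) - exp (- w2)\<bar> + \<bar>(g1+1)*w1 - (g2+1)*w2\<bar>"
    unfolding l1 l2 by linarith
  also have "\<dots> \<le> N * (4/(3 * s0)) + (c*E) * (2*c*PP x * N) + (N * (c*PP x) + (\<bar>g0\<bar>+2) * (2*c*PP x * N))"
    using T1 T2 T3 by linarith
  also have "\<dots> \<le> (4/(3 * s0) + 2*c*c + c + 2*c*(\<bar>g0\<bar>+2)) * E * PP x * N"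
  proof -
    have EP: "1 \<le> E * PP x" using E1 P1 by (metis mult_mono' mult_1 zero_le_one)
    have a: "N * (4/(3 * s0)) \<le> (4/(3 * s0)) * (E * PP x) * N"
    proof -
      have "N*(4/(3 * s0)) * 1 \<le> N*(4/(3 * s0)) * (E*PP x)" using EP Nb s0 by (intro mult_left_mono) auto
      thus ?thesis by (simp add: algebra_simps)
    qed
    have b: "N * (c*PP x) \<le> c * (E * PP x) * N"
    proof -
      have "c * PP x \<le> c * (E * PP x)" using E1 P1 cp by (intro mult_left_mono) (auto simp: mult_le_cancel_right1)
      thus ?thesis using Nb by (simp add: mult_left_mono mult.commute)
    qed
    have "(4/(3 * s0) + 2*c*c + c + 2*c*(\<bar>g0\<bar>+2)) * E * PP x * N
       = (4/(3 * s0)) * (E * PP x) * N + (c*E) * (2*c*PP x * N) + c * (E * PP x) * N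
          + (\<bar>g0\<bar>+2) * (2*c*PP x * N) * E" by (simp add: algebra_simps)
    moreover have "(\<bar>g0\<bar>+2) * (2*c*PP x * N) \<le> (\<bar>g0\<bar>+2) * (2*c*PP x * N) * E"
    proof -
      have "0 \<le> (\<bar>g0\<bar>+2) * (2*c*PP x * N)" using Nb cp P1 by simp
      hence "(\<bar>g0\<bar>+2) * (2*c*PP x * N) * 1 \<le> (\<bar>g0\<bar>+2) * (2*c*PP x * N) * E" using E1 by (intro mult_left_mono) auto
      thus ?thesis by simp
    qed
    ultimately show ?thesis using a b by linarith
  qed
  finally show ?thesis by (simp add: E_def N_def)
qed

end


lemma poly_exp:
  fixes a y :: real
  assumes a: "0 < a" "a \<le> 2" and y: "0 \<le> y"
  shows "(1+y)^2 \<le> (4/a^2) * exp (a*y)"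
proof -
  have "1 + a*y/2 \<le> exp (a*y/2)" by (rule exp_ge_add_one_self)
  hence "(2/a)*(1 + a*y/2) \<le> (2/a)*exp (a*y/2)" using a by (intro mult_left_mono) auto
  moreover have "(2/a)*(1 + a*y/2) = 2/a + y" using a by (simp add: field_simps)
  moreover have "1 \<le> 2/a" using a by (simp add: field_simps)
  ultimately have h: "1 + y \<le> (2/a)*exp (a*y/2)" by linarith
  have "(1+y)^2 \<le> ((2/a)*exp (a*y/2))^2" using h y by (intro power_mono) auto
  also have "\<dots> = (4/a^2) * (exp (a*y/2))^2" by (simp add: power_mult_distrib power_divide)
  also have "(exp (a*y/2))^2 = exp (a*y)" by (simp add: power2_eq_square exp_add[symmetric])
  finally show ?thesis .
qed

lemma final_exp:
  fixes g0 \<beta> v :: real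
  assumes g0: "-1/2 < g0" and b: "0 \<le> \<beta>"
  defines "a \<equiv> (1 + 2*max 0 (- g0))/4" and "bb \<equiv> \<beta> + \<bar>g0\<bar> + 1"
  shows "exp (\<beta> * max 0 (- v)) * ((1+\<bar>v\<bar>)^2 + exp (- g0 * v)) \<le> (4/a^2 + 5) * (exp (a* v) + exp (- bb* v))"
proof -
  have a0: "0 < a" "a \<le> 2" "max 0 (- g0) \<le> a" using g0 by (auto simp: a_def)
  have k: "0 < 4/a^2" using a0 by simp
  show ?thesis
  proof (cases "0 \<le> v")
    case True
    have p1: "(1+\<bar>v\<bar>)^2 \<le> (4/a^2)*exp (a* v)" using poly_exp[OF a0(1,2), of v] True by simp
    have p2: "exp (- g0 * v) \<le> exp (a* v)"
    proof -
      have "- g0 * v \<le> max 0 (- g0) * v" using True by (intro mult_right_mono) auto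
      also have "\<dots> \<le> a * v" using True a0 by (intro mult_right_mono) auto
      finally show ?thesis by simp
    qed
    have p3: "(4/a^2 + 1)*exp (a* v) = (4/a^2)*exp (a* v) + exp (a* v)" by (simp add: algebra_simps)
    have "(1+\<bar>v\<bar>)^2 + exp (- g0 * v) \<le> (4/a^2 + 1)*exp (a* v)" using p1 p2 p3 by linarith
    also have "\<dots> \<le> (4/a^2 + 5) * (exp (a* v) + exp (- bb* v))"
      using k by (intro mult_mono) auto
    finally show ?thesis using True by simp
  next
    case False
    define y where "y = - v"
    have y: "0 < y" using False by (simp add: y_def)
    have "(1+\<bar>v\<bar>)^2 \<le> (4/1^2)*exp (1*y)" using poly_exp[of 1 y] y by (simp add: y_def)
    hence p: "(1+\<bar>v\<bar>)^2 \<le> 4*exp y" by simp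
    have q: "exp (- g0 * v) \<le> exp (\<bar>g0\<bar> * y)"
    proof -
      have "- g0 * v = g0 * y" by (simp add: y_def)
      also have "\<dots> \<le> \<bar>g0\<bar> * y" using y by (intro mult_right_mono) auto
      finally show ?thesis by simp
    qed
    have "exp (\<beta> * max 0 (- v)) * ((1+\<bar>v\<bar>)^2 + exp (- g0 * v)) \<le> exp (\<beta> * y) * (4*exp y + exp (\<bar>g0\<bar> * y))"
      using p q y by (intro mult_mono add_mono) (auto simp: y_def)
    also have "\<dots> = 4*exp ((\<beta>+1)*y) + exp ((\<beta>+\<bar>g0\<bar>)*y)" by (simp add: algebra_simps exp_add[symmetric])
    also have "\<dots> \<le> 4*exp (bb*y) + exp (bb*y)"
    proof -
      have "(\<beta>+1)*y \<le> bb*y" using y by (intro mult_right_mono) (auto simp: bb_def)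
      moreover have "(\<beta>+\<bar>g0\<bar>)*y \<le> bb*y" using y by (intro mult_right_mono) (auto simp: bb_def)
      ultimately have "exp ((\<beta>+1)*y) \<le> exp (bb*y)" "exp ((\<beta>+\<bar>g0\<bar>)*y) \<le> exp (bb*y)" by simp_all
      thus ?thesis by linarith
    qed
    also have "\<dots> = 5 * exp (- bb* v)" by (simp add: y_def)
    also have "\<dots> \<le> (4/a^2 + 5) * (exp (a* v) + exp (- bb* v))"
      using k by (intro mult_mono) auto
    finally show ?thesis .
  qed
qed


context gsetup begin

lemma pointwise:
  "\<exists>K a b. 0 < K \<and> 0 < a \<and> a < 1/2 \<and> 0 < b \<and> (\<forall>e x g1 m1 s1 g2 m2 s2. reg e x g1 m1 s1 \<longrightarrow> reg e x g2 m2 s2 \<longrightarrow>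
     \<bar>gev_loglik (g1,m1,s1) x - gev_loglik (g2,m2,s2) x\<bar> \<le> K * (exp (a * vv x) + exp (- b * vv x)) * norm ((g1,m1,s1) - (g2,m2,s2)))"
proof -
  obtain c \<beta> where c: "IFc c \<beta>" using IFc_ex by blast
  have cp: "0 < c" and bp: "0 \<le> \<beta>" using c by (auto simp: IFc_def)
  define K0 where "K0 = 4/(3 * s0) + 2*c*c + c + 2*c*(\<bar>g0\<bar>+2)"
  define a where "a = (1 + 2*max 0 (- g0))/4"
  define b where "b = \<beta> + \<bar>g0\<bar> + 1"
  have K0p: "0 < K0" using cp s0 by (simp add: K0_def add_pos_nonneg)
  have ap: "0 < a" "a < 1/2" using g0 by (auto simp: a_def)
  have bpos: "0 < b" using bp by (simp add: b_def)
  define K where "K = K0 * (4/a^2 + 5)"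
  have Kp: "0 < K" using K0p ap by (simp add: K_def add_pos_nonneg)
  show ?thesis
  proof (intro exI conjI allI impI)
    show "0 < K" "0 < a" "a < 1/2" "0 < b" using Kp ap bpos by auto
    fix e x g1 m1 s1 g2 m2 s2 assume r1: "reg e x g1 m1 s1" and r2: "reg e x g2 m2 s2"
    define N where "N = norm ((g1,m1,s1) - (g2,m2,s2))"
    have "\<bar>gev_loglik (g1,m1,s1) x - gev_loglik (g2,m2,s2) x\<bar> \<le> K0 * (exp (\<beta> * max 0 (- vv x)) * PP x) * N"
      using ll_lip[OF c r1 r2] by (simp add: K0_def N_def mult.assoc)
    also have "\<dots> \<le> K0 * ((4/a^2 + 5) * (exp (a * vv x) + exp (- b * vv x))) * N"
    proof (intro mult_right_mono mult_left_mono)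
      show "exp (\<beta> * max 0 (- vv x)) * PP x \<le> (4/a^2 + 5) * (exp (a * vv x) + exp (- b * vv x))"
        using final_exp[OF g0 bp, of "vv x"] by (simp add: PP_def a_def b_def)
    qed (use K0p in \<open>auto simp: N_def\<close>)
    also have "\<dots> = K * (exp (a * vv x) + exp (- b * vv x)) * N" by (simp add: K_def)
    finally show "\<bar>gev_loglik (g1,m1,s1) x - gev_loglik (g2,m2,s2) x\<bar> \<le> K * (exp (a * vv x) + exp (- b * vv x)) * norm ((g1,m1,s1) - (g2,m2,s2))"
      by (simp add: N_def)
  qed
qed

end


definition Linv :: "real \<Rightarrow> real \<Rightarrow> real" where
  "Linv g y = (if g = 0 then - ln y else (y powr (- g) - 1)/g)"

lemma Linv_deriv:
  assumes y: "0 < y"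
  shows "((\<lambda>y. m0 + s0 * Linv g y) has_real_derivative (- s0 * y powr (- g - 1))) (at y)"
proof (cases "g = 0")
  case True
  have "((\<lambda>y. m0 + s0 * (- ln y)) has_real_derivative (0 + s0 * (- (1/y)))) (at y)"
    using y by (auto intro!: derivative_eq_intros)
  moreover have "y powr (-1) = 1/y" using y by (simp add: powr_minus_divide)
  ultimately show ?thesis using True by (simp add: Linv_def)
next
  case False
  have "((\<lambda>y. m0 + s0 * ((y powr (- g) - 1)/g)) has_real_derivative (0 + s0 * ((- g * y powr (- g - 1) - 0)/g))) (at y)"
    using y by (auto intro!: derivative_eq_intros has_real_derivative_powr)
  thus ?thesis using False by (simp add: Linv_def)
qed

lemma Linv_anti:
  assumes "0 < y1" "y1 < y2"
  shows "Linv g y2 < Linv g y1"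
proof -
  consider "g = 0" | "g > 0" | "g < 0" by linarith
  thus ?thesis
  proof cases
    case 1 thus ?thesis using assms by (simp add: Linv_def)
  next
    case 2
    have "y2 powr (- g) < y1 powr (- g)" using assms 2 by (intro powr_less_mono2_neg) auto
    thus ?thesis using 2 by (simp add: Linv_def divide_strict_right_mono)
  next
    case 3
    have "y1 powr (- g) < y2 powr (- g)" using assms 3 by (intro powr_less_mono2) auto
    thus ?thesis using 3 by (simp add: Linv_def divide_strict_right_mono_neg)
  qed
qed

lemma Linv_inj: "inj_on (\<lambda>y. m0 + s0 * Linv g y) {0<..}" if "0 < s0"
proof (rule inj_onI)
  fix y1 y2 :: real assume y: "y1 \<in> {0<..}" "y2 \<in> {0<..}" and e: "m0 + s0 * Linv g y1 = m0 + s0 * Linv g y2"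
  show "y1 = y2"
  proof (rule ccontr)
    assume "y1 \<noteq> y2"
    hence "y1 < y2 \<or> y2 < y1" by linarith
    hence "Linv g y1 \<noteq> Linv g y2"
    proof
      assume "y1 < y2" thus ?thesis using Linv_anti[of y1 y2 g] y by simp
    next
      assume "y2 < y1" thus ?thesis using Linv_anti[of y2 y1 g] y by simp
    qed
    thus False using e that by simp
  qed
qed

lemma Linv_props:
  fixes g m0 s0 y :: real
  assumes y: "0 < y" and s0: "0 < s0"
  defines "x \<equiv> m0 + s0 * Linv g y"
  shows "0 < 1 + g*((x-m0)/s0)" "Lf g ((x-m0)/s0) = - ln y"
proof -
  have z: "(x-m0)/s0 = Linv g y" using s0 by (simp add: x_def)
  show "0 < 1 + g*((x-m0)/s0)" unfolding z using y by (simp add: Linv_def)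
  show "Lf g ((x-m0)/s0) = - ln y" unfolding z using y by (simp add: Linv_def Lf_def ln_powr)
qed

lemma Linv_surj:
  assumes s0: "0 < s0" and q: "0 < 1 + g*((x-m0)/s0)"
  shows "x = m0 + s0 * Linv g (exp (- Lf g ((x-m0)/s0)))"
proof (cases "g = 0")
  case True thus ?thesis using s0 by (simp add: Linv_def Lf_def)
next
  case False
  have "exp (- Lf g ((x-m0)/s0)) powr (- g) = exp (ln (1 + g*((x-m0)/s0)))"
    using False by (simp add: Lf_def powr_def)
  also have "\<dots> = 1 + g*((x-m0)/s0)" using q by simp
  finally show ?thesis using False s0 by (simp add: Linv_def)
qed


lemma mu: "(\<lambda>x. gev_u (g0,m0,s0) x) \<in> borel_measurable borel"
  unfolding gev_u_def by (simp add: Let_def) measurable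
lemma md: "(\<lambda>x. gev_density (g0,m0,s0) x) \<in> borel_measurable borel"
  unfolding gev_density_def using mu by simp measurable

lemma gev_density_nn: "0 \<le> gev_density (g0,m0,s0) x" if "0 < s0"
  using that unfolding gev_density_def by auto

lemma integrable_ldot:
  fixes g0 m0 s0 K a b :: real
  assumes s0: "0 < s0" and a: "0 < a" "a < 1/2" and b: "0 < b"
  shows "integrable (gev_measure (g0,m0,s0)) (\<lambda>x. (K * (gev_u (g0,m0,s0) x powr (-a) + gev_u (g0,m0,s0) x powr b))^2)"
proof -
  define p where "p = gev_density (g0,m0,s0)"
  define F where "F = (\<lambda>x. (K * (gev_u (g0,m0,s0) x powr (-a) + gev_u (g0,m0,s0) x powr b))^2)"
  define f where "f = (\<lambda>x. p x * F x)"
  define hh where "hh = (\<lambda>y. m0 + s0 * Linv g0 y)"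
  define G where "G = (\<lambda>y::real. K^2 * (y powr ((1-2*a)-1)/exp y + 2*(y powr ((b-a+1)-1)/exp y) + y powr ((2*b+1)-1)/exp y))"
  have mp: "p \<in> borel_measurable borel" using md by (simp add: p_def)
  have mF: "F \<in> borel_measurable borel" unfolding F_def using mu by measurable
  have mf: "f \<in> borel_measurable borel" unfolding f_def using mp mF by measurable
  have pnn: "0 \<le> p x" for x using gev_density_nn[OF s0] by (simp add: p_def)
  have gi: "(\<lambda>t. t powr (c-1)/exp t) integrable_on {0..}" if "0 < c" for c :: real
    using Gamma_integral_real[OF that] by (rule has_integral_integrable)
  have Gi: "G integrable_on {0..}"
  proof -
    have "(\<lambda>y. y powr ((1-2*a)-1)/exp y + 2*(y powr ((b-a+1)-1)/exp y) + y powr ((2*b+1)-1)/exp y) integrable_on {0..}"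
      using gi[of "1-2*a"] gi[of "b-a+1"] gi[of "2*b+1"] a b
      by (intro integrable_add integrable_on_cmult_left[where c=2, simplified]) auto
    note h = this
    show ?thesis using integrable_on_cmult_left[OF h, of "K^2"] unfolding G_def by simp
  qed
  have Gnn: "0 \<le> G y" if "y \<in> {0..}" for y unfolding G_def by simp
  have Ga: "G absolutely_integrable_on {0..}" by (rule nonnegative_absolutely_integrable_1[OF Gi Gnn])
  have Ga': "G absolutely_integrable_on {0<..}"
    by (rule set_integrable_subset[OF Ga]) auto
  have eqG: "\<bar>- s0 * y powr (- g0 - 1)\<bar> * f (hh y) = G y" if y: "0 < y" for y
  proof -
    note LP = Linv_props[OF y s0, of g0 m0, folded hh_def]
    have pe: "p (hh y) = (1/s0) * exp (- y) * y powr (g0+1)"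
      using gev_density_eq[OF s0 LP(1)] LP(2) y by (simp add: p_def powr_def hh_def algebra_simps)
    have ue: "gev_u (g0,m0,s0) (hh y) = y" using gev_u_eq[OF s0 LP(1)] LP(2) y by (simp add: hh_def)
    have "\<bar>- s0 * y powr (- g0 - 1)\<bar> * f (hh y) = s0 * y powr (- g0 - 1) * ((1/s0) * exp (- y) * y powr (g0+1)) * (K * (y powr (-a) + y powr b))^2"
      using s0 by (simp add: f_def F_def pe ue abs_mult)
    also have "\<dots> = G y"
      using s0 y by (simp add: G_def powr_def power2_eq_square exp_add[symmetric] exp_minus field_simps)
    finally show ?thesis .
  qed
  have A1: "(\<lambda>y. \<bar>- s0 * y powr (- g0 - 1)\<bar> * f (hh y)) absolutely_integrable_on {0<..}"
  proof (rule set_integrable_cong[THEN iffD1, OF refl refl _ Ga'])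
    fix y :: real assume "y \<in> {0<..}"
    thus "G y = \<bar>- s0 * y powr (- g0 - 1)\<bar> * f (hh y)" using eqG by (metis greaterThan_iff)
  qed
  have A2: "f absolutely_integrable_on hh ` {0<..}"
  proof (subst absolutely_integrable_change_of_variables_1')
    show "{0<..} \<in> sets (lebesgue :: real measure)" by auto
    show "(hh has_field_derivative - s0 * y powr (- g0 - 1)) (at y within {0<..})" if "y \<in> {0<..}" for y
      using Linv_deriv[of y m0 s0 g0] that unfolding hh_def by (auto intro: has_field_derivative_at_within)
    show "inj_on hh {0<..}" unfolding hh_def by (rule Linv_inj[OF s0])
  qed (rule A1)
  have f0: "f x = 0" if "x \<notin> hh ` {0<..}" for x
  proof -
    have "\<not> 0 < 1 + g0*((x-m0)/s0)"
    proof
      assume q: "0 < 1 + g0*((x-m0)/s0)"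
      have "x = hh (exp (- Lf g0 ((x-m0)/s0)))" using Linv_surj[OF s0 q] by (simp add: hh_def)
      moreover have "exp (- Lf g0 ((x-m0)/s0)) \<in> {0<..}" by simp
      ultimately show False using that by blast
    qed
    thus ?thesis by (simp add: f_def p_def gev_density_def)
  qed
  have "(\<lambda>x. if x \<in> hh ` {0<..} then f x else 0) absolutely_integrable_on UNIV"
    using A2 by (simp add: absolutely_integrable_restrict_UNIV)
  moreover have "(\<lambda>x. if x \<in> hh ` {0<..} then f x else 0) = f" using f0 by auto
  ultimately have "f absolutely_integrable_on UNIV" by simp
  hence "integrable lebesgue f" by (simp add: set_integrable_def)
  hence "integrable lborel f" using integrable_completion[of f lborel] mf by simp
  hence "integrable lborel (\<lambda>x. p x *\<^sub>R F x)" by (simp add: f_def)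
  hence "integrable (density lborel p) F"
    using mp mF pnn by (subst integrable_density) auto
  thus ?thesis by (simp add: gev_measure_def p_def F_def)
qed


theorem lemmaE2:
  fixes \<Theta> :: "(real \<times> real \<times> real) set" and \<theta>0 :: "real \<times> real \<times> real"
  assumes "\<Theta> = Theta_full \<or> (compact \<Theta> \<and> \<Theta> \<subseteq> Theta_full \<and> \<theta>0 \<in> interior \<Theta>)"
    and "\<theta>0 \<in> \<Theta>"
  shows "\<exists>ldot :: real \<Rightarrow> real. \<exists>\<epsilon>0 > 0.
           ldot \<in> borel_measurable (gev_measure \<theta>0) \<and>
           integrable (gev_measure \<theta>0) (\<lambda>x. (ldot x)\<^sup>2) \<and>
           (\<forall>\<epsilon>. 0 < \<epsilon> \<and> \<epsilon> < \<epsilon>0 \<longrightarrow>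
              (\<forall>x \<in> common_support \<Theta> \<theta>0 (2 * \<epsilon>).
                 \<forall>\<theta>1 \<in> par_nbhd \<Theta> \<theta>0 \<epsilon>. \<forall>\<theta>2 \<in> par_nbhd \<Theta> \<theta>0 \<epsilon>.
                   \<bar>gev_loglik \<theta>1 x - gev_loglik \<theta>2 x\<bar> \<le> ldot x * norm (\<theta>1 - \<theta>2)))"
proof -
  obtain g0 m0 s0 where th0: "\<theta>0 = (g0,m0,s0)" by (metis prod_cases3)
  have sub: "\<Theta> \<subseteq> Theta_full" using assms(1) by auto
  have "\<theta>0 \<in> Theta_full" using sub assms(2) by auto
  hence s0: "0 < s0" and g0: "-1/2 < g0" by (auto simp: Theta_full_def th0)
  obtain r where r: "0 < r" "ball \<theta>0 r \<subseteq> \<Theta>"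
  proof (cases "\<Theta> = Theta_full")
    case True
    have "open Theta_full" unfolding Theta_full_def
      by (intro open_Times) auto
    thus ?thesis using that True assms(2) by (meson open_contains_ball)
  next
    case False
    hence "\<theta>0 \<in> interior \<Theta>" using assms(1) by auto
    thus ?thesis using that by (meson mem_interior)
  qed
  define e0 where "e0 = min (r/2) (min 1 (min (s0/4) (if g0 = 0 then 1 else \<bar>g0\<bar>/2)))"
  have e0p: "0 < e0" using r s0 by (auto simp: e0_def)
  interpret gsetup g0 m0 s0 e0
    by unfold_locales (use s0 g0 e0p in \<open>auto simp: e0_def\<close>)
  obtain K a b where Kab: "0 < K" "0 < a" "a < 1/2" "0 < b"
    and PW: "\<And>e x g1 m1 s1 g2 m2 s2. reg e x g1 m1 s1 \<Longrightarrow> reg e x g2 m2 s2 \<Longrightarrow>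
     \<bar>gev_loglik (g1,m1,s1) x - gev_loglik (g2,m2,s2) x\<bar> \<le> K * (exp (a * vv x) + exp (- b * vv x)) * norm ((g1,m1,s1) - (g2,m2,s2))"
    using pointwise by blast
  define ldot where "ldot = (\<lambda>x. K * (gev_u (g0,m0,s0) x powr (-a) + gev_u (g0,m0,s0) x powr b))"
  show ?thesis
  proof (intro exI[of _ ldot] exI[of _ e0] conjI allI impI ballI)
    show "0 < e0" by (rule e0p)
    have "ldot \<in> borel_measurable borel" unfolding ldot_def using mu by measurable
    thus "ldot \<in> borel_measurable (gev_measure \<theta>0)"
      by (simp add: gev_measure_def th0)
    show "integrable (gev_measure \<theta>0) (\<lambda>x. (ldot x)\<^sup>2)"
      unfolding th0 ldot_def by (rule integrable_ldot[OF s0 Kab(2,3,4)])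
    fix \<epsilon> x \<theta>1 \<theta>2
    assume eps: "0 < \<epsilon> \<and> \<epsilon> < e0" and x: "x \<in> common_support \<Theta> \<theta>0 (2 * \<epsilon>)"
      and t1: "\<theta>1 \<in> par_nbhd \<Theta> \<theta>0 \<epsilon>" and t2: "\<theta>2 \<in> par_nbhd \<Theta> \<theta>0 \<epsilon>"
    obtain g1 m1 s1 where th1: "\<theta>1 = (g1,m1,s1)" by (metis prod_cases3)
    obtain g2 m2 s2 where th2: "\<theta>2 = (g2,m2,s2)" by (metis prod_cases3)
    have hx: "\<forall>\<theta>'. norm (\<theta>' - (g0,m0,s0)) < 2*\<epsilon> \<longrightarrow> x \<in> gev_support \<theta>'"
    proof (intro allI impI)
      fix \<theta>' :: "real \<times> real \<times> real" assume n: "norm (\<theta>' - (g0,m0,s0)) < 2*\<epsilon>"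
      have "2*\<epsilon> \<le> r" using eps by (simp add: e0_def)
      hence "\<theta>' \<in> ball \<theta>0 r" using n by (simp add: th0 dist_norm norm_minus_commute)
      hence "\<theta>' \<in> par_nbhd \<Theta> \<theta>0 (2*\<epsilon>)" using r n by (auto simp: par_nbhd_def th0)
      thus "x \<in> gev_support \<theta>'" using x by (auto simp: common_support_def)
    qed
    have r1: "reg \<epsilon> x g1 m1 s1" using eps hx t1 by (simp add: reg_def par_nbhd_def th1 th0)
    have r2: "reg \<epsilon> x g2 m2 s2" using eps hx t2 by (simp add: reg_def par_nbhd_def th2 th0)
    have q0: "0 < 1 + g0*((x-m0)/s0)" using reg_basic(5)[OF r1] by simp
    have u: "gev_u (g0,m0,s0) x = exp (- vv x)" using gev_u_eq[OF s0 q0] by (simp add: vv_def)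
    have ld: "ldot x = K * (exp (a * vv x) + exp (- b * vv x))"
      by (simp add: ldot_def u powr_def)
    show "\<bar>gev_loglik \<theta>1 x - gev_loglik \<theta>2 x\<bar> \<le> ldot x * norm (\<theta>1 - \<theta>2)"
      using PW[OF r1 r2] by (simp add: ld th1 th2)
  qed
qed


end
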